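(* Consider a Hamiltonian system $\dot p=-\nabla_qH(p,q)$, $\dot q=\nabla_pH(p,q)$, $p(t_0)=p_0$, $q(t_0)=q_0$, with smooth Hamiltonian $H$ and $C^\infty$ solution $(p(t),q(t))$, approximated by a partitioned linear multistep method $\rho_p(E)p_n=h\sigma_p(E)f(p_n,q_n)$, $\rho_q(E)q_n=h\sigma_q(E)g(p_n,q_n)$ (with $f=-\nabla_qH$, $g=\nabla_pH$) of order $r$ in which both methods $(\rho_p,\sigma_p)$ and $(\rho_q,\sigma_q)$ are symmetric. Let $(p_h(t),q_h(t))=(p(t),q(t))+\sum_{j=r}^{2r-1}h^j(e_{j,1,p}(t),e_{j,1,q}(t))$ be the smooth part of the numerical solution, where $e_{j,1,p},e_{j,1,q}$ are the coefficient functions associated to the root $1$ in the asymptotic expansion of the global error, satisfying $$\frac{d}{dt}\begin{pmatrix}e_{j,1,p}\\ e_{j,1,q}\end{pmatrix}=\begin{pmatrix}f_p&f_q\\ g_p&g_q\end{pmatrix}(p(t),q(t))\begin{pmatrix}e_{j,1,p}\\ e_{j,1,q}\end{pmatrix}-\begin{pmatrix}c_{j,p}p^{(j+1)}\\ c_{j,q}q^{(j+1)}\end{pmatrix}.$$ Then $$H(p_h(t),q_h(t))-H(p_h(t_0),q_h(t_0))=\sum_{k=r/2}^{r-1}h^{2k}\Big[c_{2k,q}\sum_{l=1}^k(-1)^{l+1}\big[p^{(l)}(t)^Tq^{(2k+1-l)}(t)-p^{(l)}(t_0)^Tq^{(2k+1-l)}(t_0)\big]$$ $$-c_{2k,p}\sum_{l=1}^k(-1)^{l+1}\big[q^{(l)}(t)^Tp^{(2k+1-l)}(t)-q^{(l)}(t_0)^Tp^{(2k+1-l)}(t_0)\big]\Big]$$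 $$+\sum_{k=r/2}^{r-1}h^{2k}(-1)^{k+2}(c_{2k,q}-c_{2k,p})\int_{t_0}^tp^{(k+1)}(s)^Tq^{(k+1)}(s)\,ds+O(t\,h^{2r}).$$
   Context: $E$ is the shift operator, $t_n=nh$. Both methods are zero-stable of order $r$, with local truncation errors $\rho_\alpha(E)y(t_n)-h\sigma_\alpha(E)\dot y(t_n)=\sigma_\alpha(E)(\sum_{j=r}^{2r-1}c_{j,\alpha}h^{j+1}y^{(j+1)}(t_n))+O(h^{2r+1})$, $\alpha\in\{p,q\}$, for smooth $y$. A linear multistep method $(\rho,\sigma)$ with $\deg\rho=k$ is symmetric if $\rho(x)=-x^k\rho(1/x)$ and $\sigma(x)=x^k\sigma(1/x)$; for symmetric methods the order $r$ is even and $c_{j,\alpha}=0$ for odd $j$. *)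

theory Defs
  imports "HOL-Analysis.Analysis" "HOL-Computational_Algebra.Computational_Algebra"
begin

text \<open>The formal power series of rho(e^z) for a real polynomial rho (z corresponds to hD,
  since E = e^{hD}).\<close>
definition lmm_fps :: "real poly \<Rightarrow> real fps" where
  "lmm_fps \<rho> = (\<Sum>i\<le>degree \<rho>. fps_const (coeff \<rho> i) * fps_exp (real i))"

definition lmm :: "real poly \<Rightarrow> real poly \<Rightarrow> bool" where
  "lmm \<rho> \<sigma> \<longleftrightarrow> \<rho> \<noteq> 0 \<and> degree \<sigma> \<le> degree \<rho>"

definition zero_stable :: "real poly \<Rightarrow> bool" where
  "zero_stable \<rho> \<longleftrightarrow> \<rho> \<noteq> 0 \<and>
     (\<forall>z::complex. poly (map_poly complex_of_real \<rho>) z = 0 \<longrightarrow>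
        cmod z \<le> 1 \<and> (cmod z = 1 \<longrightarrow> order z (map_poly complex_of_real \<rho>) = 1))"

definition lmm_order :: "real poly \<Rightarrow> real poly \<Rightarrow> nat \<Rightarrow> bool" where
  "lmm_order \<rho> \<sigma> r \<longleftrightarrow>
     (\<forall>n\<le>r. (lmm_fps \<rho> - fps_X * lmm_fps \<sigma>) $ n = 0) \<and>
     (lmm_fps \<rho> - fps_X * lmm_fps \<sigma>) $ (r + 1) \<noteq> 0"

definition symmetric_lmm :: "real poly \<Rightarrow> real poly \<Rightarrow> bool" where
  "symmetric_lmm \<rho> \<sigma> \<longleftrightarrow>
     (\<forall>x::real. x \<noteq> 0 \<longrightarrow> poly \<rho> x = - (x ^ degree \<rho>) * poly \<rho> (1 / x)) \<and>
     (\<forall>x::real. x \<noteq> 0 \<longrightarrow> poly \<sigma> x = x ^ degree \<rho> * poly \<sigma> (1 / x))"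

text \<open>Local truncation error expansion:
  rho(E)y(t_n) - h sigma(E) y'(t_n) = sigma(E)(sum_{j=r}^{2r-1} c_j h^{j+1} y^{(j+1)}(t_n)) + O(h^{2r+1}),
  i.e. rho(e^z) - z sigma(e^z) - sigma(e^z) sum_{j=r}^{2r-1} c_j z^{j+1} = O(z^{2r+1}).\<close>
definition lte_constants :: "real poly \<Rightarrow> real poly \<Rightarrow> nat \<Rightarrow> (nat \<Rightarrow> real) \<Rightarrow> bool" where
  "lte_constants \<rho> \<sigma> r c \<longleftrightarrow>
     (\<forall>n\<le>2*r. (lmm_fps \<rho> - fps_X * lmm_fps \<sigma>
                - lmm_fps \<sigma> * (\<Sum>j\<in>{r..<2*r}. fps_const (c j) * fps_X ^ (j + 1))) $ n = 0)"

fun vderiv_n :: "nat \<Rightarrow> (real \<Rightarrow> 'a::real_normed_vector) \<Rightarrow> real \<Rightarrow> 'a" where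
  "vderiv_n 0 f = f"
| "vderiv_n (Suc n) f = (\<lambda>t. vector_derivative (vderiv_n n f) (at t))"

definition smooth_on_real :: "real set \<Rightarrow> (real \<Rightarrow> 'a::real_normed_vector) \<Rightarrow> bool" where
  "smooth_on_real S f \<longleftrightarrow> (\<forall>n. \<forall>t\<in>S. vderiv_n n f differentiable (at t))"

definition dirderiv :: "('a::real_normed_vector \<Rightarrow> 'b::real_normed_vector) \<Rightarrow> 'a \<Rightarrow> 'a \<Rightarrow> 'b" where
  "dirderiv F v x = vector_derivative (\<lambda>s. F (x + s *\<^sub>R v)) (at 0)"

fun iter_dirderiv :: "('a::real_normed_vector \<Rightarrow> 'b::real_normed_vector) \<Rightarrow> 'a list \<Rightarrow> 'a \<Rightarrow> 'b" where
  "iter_dirderiv F [] = F"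
| "iter_dirderiv F (v # vs) = dirderiv (iter_dirderiv F vs) v"

definition smooth :: "('a::euclidean_space \<Rightarrow> 'b::real_normed_vector) \<Rightarrow> bool" where
  "smooth F \<longleftrightarrow> (\<forall>vs. set vs \<subseteq> Basis \<longrightarrow> (\<forall>x. iter_dirderiv F vs differentiable (at x)))"

definition grad_p :: "((real^'d) \<times> (real^'d) \<Rightarrow> real) \<Rightarrow> (real^'d) \<times> (real^'d) \<Rightarrow> real^'d" where
  "grad_p H x = (\<chi> i. dirderiv H (axis i 1, 0) x)"

definition grad_q :: "((real^'d) \<times> (real^'d) \<Rightarrow> real) \<Rightarrow> (real^'d) \<times> (real^'d) \<Rightarrow> real^'d" where
  "grad_q H x = (\<chi> i. dirderiv H (0, axis i 1) x)"

definition jac_p :: "((real^'d) \<times> (real^'d) \<Rightarrow> real^'d) \<Rightarrow> (real^'d) \<times> (real^'d) \<Rightarrow> real^'d^'d" where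
  "jac_p F x = (\<chi> i k. dirderiv (\<lambda>y. F y $ i) (axis k 1, 0) x)"

definition jac_q :: "((real^'d) \<times> (real^'d) \<Rightarrow> real^'d) \<Rightarrow> (real^'d) \<times> (real^'d) \<Rightarrow> real^'d^'d" where
  "jac_q F x = (\<chi> i k. dirderiv (\<lambda>y. F y $ i) (0, axis k 1) x)"

end

theory Submission
  imports Defs
begin

no_notation fps_nth (infixl \<open>$\<close> 75)


lemma coeff_sym:
  fixes f :: "real poly" and s :: real
  assumes deg: "degree f \<le> k"
    and H: "\<And>x. x \<noteq> 0 \<Longrightarrow> poly f x = s * x ^ k * poly f (1 / x)"
    and i: "i \<le> k"
  shows "coeff f i = s * coeff f (k - i)"
proof -
  define Q where "Q = (\<Sum>i\<in>{0..k}. monom (coeff f i - s * coeff f (k - i)) i)"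
  have pf: "poly f x = (\<Sum>i\<in>{0..k}. coeff f i * x ^ i)" for x
  proof -
    have "f = (\<Sum>i\<le>k. monom (coeff f i) i)" using poly_as_sum_of_monoms'[OF deg] by simp
    then have "poly f x = poly (\<Sum>i\<le>k. monom (coeff f i) i) x" by simp
    also have "\<dots> = (\<Sum>i\<le>k. coeff f i * x ^ i)" by (simp add: poly_sum poly_monom)
    finally show ?thesis by (simp add: atMost_atLeast0)
  qed
  have Q0: "poly Q x = 0" if "x \<noteq> 0" for x
  proof -
    have "x ^ k * poly f (1/x) = (\<Sum>i\<in>{0..k}. coeff f i * (x ^ k * (1/x)^i))"
      by (simp add: pf sum_distrib_left algebra_simps)
    also have "\<dots> = (\<Sum>i\<in>{0..k}. coeff f i * x ^ (k - i))"
      by (rule sum.cong) (auto simp: power_diff that power_one_over)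
    also have "\<dots> = (\<Sum>i\<in>{0..k}. coeff f (k - i) * x ^ i)"
      by (subst sum.atLeastAtMost_rev) (rule sum.cong, auto)
    finally have e: "x ^ k * poly f (1/x) = (\<Sum>i\<in>{0..k}. coeff f (k - i) * x ^ i)" .
    have "poly Q x = (\<Sum>i\<in>{0..k}. (coeff f i - s * coeff f (k - i)) * x ^ i)"
      by (simp add: Q_def poly_sum poly_monom)
    also have "\<dots> = (\<Sum>i\<in>{0..k}. coeff f i * x ^ i) - s * (\<Sum>i\<in>{0..k}. coeff f (k - i) * x ^ i)"
      by (simp add: sum_subtractf sum_distrib_left left_diff_distrib mult.assoc)
    also have "\<dots> = poly f x - s * (x ^ k * poly f (1/x))"
      by (metis e pf)
    also have "\<dots> = 0" using H[OF that] by simp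
    finally show ?thesis .
  qed
  have "Q = 0"
  proof (rule ccontr)
    assume "Q \<noteq> 0"
    then have "finite {x. poly Q x = 0}" by (rule poly_roots_finite)
    then have "finite ({x. poly Q x = 0} \<union> {0})" by simp
    moreover have "{x. poly Q x = 0} \<union> {0} = (UNIV :: real set)" using Q0 by auto
    ultimately have "finite (UNIV :: real set)" by metis
    then show False by (simp add: infinite_UNIV_char_0)
  qed
  then have "coeff Q i = 0" by simp
  moreover have "coeff Q i = coeff f i - s * coeff f (k - i)"
    using i by (simp add: Q_def coeff_sum)
  ultimately show ?thesis by simp
qed

lemma lmm_fps_ext:
  assumes "degree f \<le> k"
  shows "lmm_fps f = (\<Sum>i\<in>{0..k}. fps_const (coeff f i) * fps_exp (real i))"
  unfolding lmm_fps_def atMost_atLeast0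
  by (rule sum.mono_neutral_left) (use assms in \<open>auto simp: coeff_eq_0\<close>)

lemma shifted_nth:
  "fps_nth (fps_exp (- (real k / 2)) * (\<Sum>i\<in>{0..k}. fps_const (a i) * fps_exp (real i))) n
     = (\<Sum>i\<in>{0..k}. a i * (real i - real k / 2) ^ n) / fact n"
proof -
  have "fps_exp (- (real k / 2)) * (\<Sum>i\<in>{0..k}. fps_const (a i) * fps_exp (real i))
      = (\<Sum>i\<in>{0..k}. fps_const (a i) * fps_exp (real i - real k / 2))"
  proof -
    have e: "fps_exp (real i - real k / 2) = fps_exp (- (real k/2)) * fps_exp (real i)" for i
      using fps_exp_add_mult[of "-(real k/2)" "real i"] by simp
    show ?thesis unfolding sum_distrib_left e by (simp add: mult.left_commute)
  qed
  then show ?thesis by (simp add: fps_sum_nth sum_divide_distrib)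
qed

lemma parity_sum:
  fixes a :: "nat \<Rightarrow> real"
  assumes "\<And>i. i \<le> k \<Longrightarrow> a i = s * a (k - i)"
  shows "(\<Sum>i\<in>{0..k}. a i * (real i - real k / 2) ^ n) = s * (-1) ^ n * (\<Sum>i\<in>{0..k}. a i * (real i - real k / 2) ^ n)"
proof -
  have "(\<Sum>i\<in>{0..k}. a i * (real i - real k / 2) ^ n) = (\<Sum>i\<in>{0..k}. a (k - i) * (real (k - i) - real k / 2) ^ n)"
    by (subst sum.atLeastAtMost_rev) simp
  also have "\<dots> = (\<Sum>i\<in>{0..k}. s * (-1) ^ n * (a i * (real i - real k / 2) ^ n))"
  proof (rule sum.cong)
    fix i assume "i \<in> {0..k}"
    then have ik: "i \<le> k" by simp
    have "a (k - i) = s * a i" using assms[of "k - i"] ik by simp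
    moreover have "real (k - i) - real k / 2 = - (real i - real k / 2)" using ik by (simp add: of_nat_diff)
    then have "(real (k - i) - real k / 2) ^ n = (-1) ^ n * (real i - real k / 2) ^ n"
      by (simp only: power_minus[of "real i - real k / 2"])
    ultimately show "a (k - i) * (real (k - i) - real k / 2) ^ n = s * (-1) ^ n * (a i * (real i - real k / 2) ^ n)"
      by simp
  qed simp
  also have "\<dots> = s * (-1) ^ n * (\<Sum>i\<in>{0..k}. a i * (real i - real k / 2) ^ n)"
    by (simp only: sum_distrib_left)
  finally show ?thesis .
qed

lemma sym_lmm_consts:
  assumes lmm: "lmm \<rho> \<sigma>" and ord: "lmm_order \<rho> \<sigma> r" and sym: "symmetric_lmm \<rho> \<sigma>"
    and lte: "lte_constants \<rho> \<sigma> r c"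
  shows "even r \<and> (\<forall>j. r \<le> j \<and> j < 2 * r \<and> odd j \<longrightarrow> c j = 0)"
proof -
  define k where "k = degree \<rho>"
  have degs: "degree \<sigma> \<le> k" using lmm by (simp add: lmm_def k_def)
  have crho: "coeff \<rho> i = (-1) * coeff \<rho> (k - i)" if "i \<le> k" for i
  proof (rule coeff_sym[OF _ _ that])
    show "degree \<rho> \<le> k" by (simp add: k_def)
    fix x :: real assume "x \<noteq> 0"
    then have "poly \<rho> x = - (x ^ k) * poly \<rho> (1 / x)"
      using sym unfolding symmetric_lmm_def k_def by blast
    then show "poly \<rho> x = (-1) * x ^ k * poly \<rho> (1 / x)" by (simp only: mult_minus1)
  qed
  have csig: "coeff \<sigma> i = 1 * coeff \<sigma> (k - i)" if "i \<le> k" for i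
  proof (rule coeff_sym[OF degs _ that])
    fix x :: real assume "x \<noteq> 0"
    then have "poly \<sigma> x = x ^ k * poly \<sigma> (1 / x)"
      using sym unfolding symmetric_lmm_def k_def by blast
    then show "poly \<sigma> x = 1 * x ^ k * poly \<sigma> (1 / x)" by (simp only: mult_1)
  qed
  define L\<rho> where "L\<rho> = lmm_fps \<rho>"
  define L\<sigma> where "L\<sigma> = lmm_fps \<sigma>"
  define e where "e = fps_exp (- (real k / 2))"
  have Lr: "L\<rho> = (\<Sum>i\<in>{0..k}. fps_const (coeff \<rho> i) * fps_exp (real i))"
    unfolding L\<rho>_def by (rule lmm_fps_ext) (simp add: k_def)
  have Ls: "L\<sigma> = (\<Sum>i\<in>{0..k}. fps_const (coeff \<sigma> i) * fps_exp (real i))"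
    unfolding L\<sigma>_def by (rule lmm_fps_ext[OF degs])
  have er: "fps_nth (e * L\<rho>) n = 0" if "even n" for n
  proof -
    have "(\<Sum>i\<in>{0..k}. coeff \<rho> i * (real i - real k / 2) ^ n) = (-1) * (-1) ^ n * (\<Sum>i\<in>{0..k}. coeff \<rho> i * (real i - real k / 2) ^ n)"
      by (rule parity_sum) (rule crho)
    then have "(\<Sum>i\<in>{0..k}. coeff \<rho> i * (real i - real k / 2) ^ n) = 0" using that by simp
    then show ?thesis unfolding e_def Lr shifted_nth by simp
  qed
  have es: "fps_nth (e * L\<sigma>) n = 0" if "odd n" for n
  proof -
    have "(\<Sum>i\<in>{0..k}. coeff \<sigma> i * (real i - real k / 2) ^ n) = 1 * (-1) ^ n * (\<Sum>i\<in>{0..k}. coeff \<sigma> i * (real i - real k / 2) ^ n)"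
      by (rule parity_sum) (rule csig)
    then have "(\<Sum>i\<in>{0..k}. coeff \<sigma> i * (real i - real k / 2) ^ n) = 0" using that by simp
    then show ?thesis unfolding e_def Ls shifted_nth by simp
  qed
  have e0: "fps_nth e 0 = 1" by (simp add: e_def)
  define P where "P = (\<Sum>j\<in>{r..<2*r}. fps_const (c j) * fps_X ^ (j + 1))"
  have Pn: "fps_nth P m = (\<Sum>j\<in>{r..<2*r}. if m = j + 1 then c j else 0)" for m
    unfolding P_def fps_sum_nth by (rule sum.cong) auto
  have Psmall: "fps_nth P m = 0" if "m \<le> r" for m
    unfolding Pn using that by (intro sum.neutral) auto
  have Pj: "fps_nth P (j + 1) = c j" if "j \<in> {r..<2*r}" for j
    unfolding Pn using that by (simp add: sum.delta)
  define D where "D = L\<rho> - fps_X * L\<sigma> - L\<sigma> * P"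
  have D0: "fps_nth D n = 0" if "n \<le> 2 * r" for n
    using lte that unfolding lte_constants_def D_def L\<rho>_def L\<sigma>_def P_def by blast
  have eD0: "fps_nth (e * D) n = 0" if "n \<le> 2 * r" for n
    unfolding fps_mult_nth using that by (intro sum.neutral) (auto simp: D0)
  have eD: "e * D = e * L\<rho> - fps_X * (e * L\<sigma>) - (e * L\<sigma>) * P"
    unfolding D_def by (simp add: algebra_simps)
  have key: "fps_nth ((e * L\<sigma>) * P) n = 0" if "even n" "n \<le> 2 * r" for n
  proof -
    have "fps_nth (e * D) n = 0" using eD0 that by simp
    moreover have "fps_nth (fps_X * (e * L\<sigma>)) n = 0"
      using that es[of "n - 1"] by (cases n) auto
    ultimately show ?thesis unfolding eD using er[OF that(1)] by simp
  qed
  have A: "fps_nth L\<sigma> 0 * c r \<noteq> 0" if "r \<ge> 1"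
  proof -
    have "fps_nth (L\<rho> - fps_X * L\<sigma>) (r + 1) \<noteq> 0"
      using ord unfolding lmm_order_def L\<rho>_def L\<sigma>_def by blast
    moreover have "fps_nth D (r + 1) = 0" using D0 that by simp
    moreover have "fps_nth (L\<sigma> * P) (r + 1) = fps_nth L\<sigma> 0 * c r"
    proof -
      have "fps_nth (L\<sigma> * P) (r + 1) = (\<Sum>i=0..r+1. fps_nth L\<sigma> i * fps_nth P (r + 1 - i))"
        by (rule fps_mult_nth)
      also have "\<dots> = fps_nth L\<sigma> 0 * fps_nth P (r + 1) + (\<Sum>i=1..r+1. fps_nth L\<sigma> i * fps_nth P (r + 1 - i))"
        by (simp add: sum.atLeast_Suc_atMost)
      also have "(\<Sum>i=1..r+1. fps_nth L\<sigma> i * fps_nth P (r + 1 - i)) = 0"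
        by (intro sum.neutral) (auto simp: Psmall)
      finally show ?thesis using Pj[of r] that by simp
    qed
    moreover have "fps_nth D (r+1) = fps_nth (L\<rho> - fps_X * L\<sigma>) (r+1) - fps_nth (L\<sigma> * P) (r+1)"
      unfolding D_def by (simp only: fps_sub_nth)
    ultimately show ?thesis by (metis eq_iff_diff_eq_0)
  qed
  have Peven: "fps_nth P n = 0" if "even n" "n \<le> 2 * r" for n
    using that
  proof (induction n rule: less_induct)
    case (less n)
    show ?case
    proof (cases "n \<le> r")
      case True then show ?thesis by (rule Psmall)
    next
      case False
      then have r1: "r \<ge> 1" using less.prems by (cases r) auto
      have s0: "fps_nth (e * L\<sigma>) 0 \<noteq> 0" using A[OF r1] by (simp add: e0)
      have "fps_nth ((e * L\<sigma>) * P) n = (\<Sum>i=0..n. fps_nth (e * L\<sigma>) i * fps_nth P (n - i))"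
        by (rule fps_mult_nth)
      also have "\<dots> = fps_nth (e * L\<sigma>) 0 * fps_nth P n + (\<Sum>i=1..n. fps_nth (e * L\<sigma>) i * fps_nth P (n - i))"
        by (simp add: sum.atLeast_Suc_atMost)
      also have "(\<Sum>i=1..n. fps_nth (e * L\<sigma>) i * fps_nth P (n - i)) = 0"
      proof (intro sum.neutral ballI)
        fix i assume i: "i \<in> {1..n}"
        show "fps_nth (e * L\<sigma>) i * fps_nth P (n - i) = 0"
        proof (cases "odd i")
          case True then show ?thesis using es by simp
        next
          case False
          then have "even (n - i)" using less.prems i by auto
          then have "fps_nth P (n - i) = 0" using less.IH[of "n - i"] less.prems i by auto
          then show ?thesis by simp
        qed
      qed
      finally have "fps_nth (e * L\<sigma>) 0 * fps_nth P n = 0" using key less.prems by simp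
      then show ?thesis using s0 by simp
    qed
  qed
  have codd: "c j = 0" if "r \<le> j" "j < 2 * r" "odd j" for j
    using Peven[of "j + 1"] Pj[of j] that by simp
  have "even r"
  proof (rule ccontr)
    assume "odd r"
    then have "r \<ge> 1" by (cases r) auto
    then show False using A codd[of r] \<open>odd r\<close> by simp
  qed
  then show ?thesis using codd by blast
qed




lemma dirderiv_hvd:
  fixes F :: "'a::real_normed_vector \<Rightarrow> 'b::real_normed_vector"
  assumes "F differentiable (at x)"
  shows "((\<lambda>s. F (x + s *\<^sub>R v)) has_vector_derivative frechet_derivative F (at x) v) (at 0)"
proof -
  let ?L = "frechet_derivative F (at x)"
  have d: "(F has_derivative ?L) (at x)" using assms frechet_derivative_works by blast
  have lin: "linear ?L" using has_derivative_linear[OF d] .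
  have l: "((\<lambda>s::real. x + s *\<^sub>R v) has_derivative (\<lambda>s. s *\<^sub>R v)) (at 0)"
    by (auto intro!: derivative_eq_intros)
  have d': "(F has_derivative ?L) (at ((\<lambda>s::real. x + s *\<^sub>R v) 0))" using d by simp
  have "((F \<circ> (\<lambda>s::real. x + s *\<^sub>R v)) has_derivative (?L \<circ> (\<lambda>s. s *\<^sub>R v))) (at 0)"
    by (rule diff_chain_at[OF l d'])
  then have "((\<lambda>s. F (x + s *\<^sub>R v)) has_derivative (\<lambda>s. s *\<^sub>R ?L v)) (at 0)"
    by (simp add: o_def linear_cmul[OF lin])
  then show ?thesis by (simp add: has_vector_derivative_def)
qed

lemma dirderiv_frechet:
  fixes F :: "'a::real_normed_vector \<Rightarrow> 'b::real_normed_vector"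
  assumes "F differentiable (at x)"
  shows "dirderiv F v x = frechet_derivative F (at x) v"
  unfolding dirderiv_def by (rule vector_derivative_at[OF dirderiv_hvd[OF assms]])

lemma dirderiv_neg:
  fixes F :: "'a::real_normed_vector \<Rightarrow> 'b::real_normed_vector"
  assumes "F differentiable (at x)"
  shows "dirderiv (\<lambda>y. - F y) v x = - dirderiv F v x"
proof -
  have "((\<lambda>s. - F (x + s *\<^sub>R v)) has_vector_derivative - frechet_derivative F (at x) v) (at 0)"
    using dirderiv_hvd[OF assms] by (rule has_vector_derivative_minus)
  then show ?thesis unfolding dirderiv_def using dirderiv_frechet[OF assms, of v]
    by (simp add: vector_derivative_at dirderiv_def)
qed

definition lin1 :: "((real^'d) \<times> (real^'d) \<Rightarrow> real) \<Rightarrow> (real^'d) \<times> (real^'d) \<Rightarrow> (real^'d) \<times> (real^'d) \<Rightarrow> real" where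
  "lin1 f z \<delta> = (\<Sum>k\<in>UNIV. fst \<delta> $ k * dirderiv f (axis k 1, 0) z) + (\<Sum>k\<in>UNIV. snd \<delta> $ k * dirderiv f (0, axis k 1) z)"

lemma vec_expand: "(\<Sum>k\<in>UNIV. (u::real^'d) $ k *\<^sub>R axis k 1) = u"
  by (simp add: vec_eq_iff sum_component axis_def if_distrib[of "\<lambda>x. _ * x"] cong: if_cong)

lemma frechet_lin1:
  fixes f :: "(real^'d) \<times> (real^'d) \<Rightarrow> real"
  assumes "f differentiable (at z)"
  shows "frechet_derivative f (at z) \<delta> = lin1 f z \<delta>"
proof -
  let ?L = "frechet_derivative f (at z)"
  have d: "(f has_derivative ?L) (at z)" using assms frechet_derivative_works by blast
  have lin: "linear ?L" using has_derivative_linear[OF d] .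
  have s1: "?L (c *\<^sub>R a, 0) = c * ?L (a, 0)" for c a
    using linear_cmul[OF lin, of c "(a, 0)"] by simp
  have s2: "?L (0, c *\<^sub>R a) = c * ?L (0, a)" for c a
    using linear_cmul[OF lin, of c "(0, a)"] by simp
  have uw: "\<delta> = (\<Sum>k\<in>UNIV. fst \<delta> $ k *\<^sub>R (axis k 1 :: real^'d, 0 :: real^'d)) + (\<Sum>k\<in>UNIV. snd \<delta> $ k *\<^sub>R (0 :: real^'d, axis k 1 :: real^'d))"
    by (simp add: prod_eq_iff fst_sum snd_sum vec_expand)
  have "?L \<delta> = ?L ((\<Sum>k\<in>UNIV. fst \<delta> $ k *\<^sub>R (axis k 1 :: real^'d, 0 :: real^'d)) + (\<Sum>k\<in>UNIV. snd \<delta> $ k *\<^sub>R (0 :: real^'d, axis k 1 :: real^'d)))"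
    using uw by metis
  also have "\<dots> = lin1 f z \<delta>"
    by (simp add: s1 s2 linear_add[OF lin] linear_sum[OF lin] linear_cmul[OF lin] dirderiv_frechet[OF assms] lin1_def)
  finally show ?thesis .
qed

lemma has_derivative_lin1:
  fixes f :: "(real^'d) \<times> (real^'d) \<Rightarrow> real"
  assumes "f differentiable (at z)"
  shows "(f has_derivative lin1 f z) (at z)"
proof -
  have "(f has_derivative frechet_derivative f (at z)) (at z)" using assms frechet_derivative_works by blast
  moreover have "frechet_derivative f (at z) = lin1 f z" using frechet_lin1[OF assms] by (intro ext) simp
  ultimately show ?thesis by simp
qed

lemma linear_lin1:
  fixes f :: "(real^'d) \<times> (real^'d) \<Rightarrow> real"
  assumes "f differentiable (at z)"
  shows "linear (lin1 f z)"
  using has_derivative_linear[OF has_derivative_lin1[OF assms]] .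

lemma curve_chain:
  fixes f :: "(real^'d) \<times> (real^'d) \<Rightarrow> real"
  assumes Y: "(Y has_vector_derivative Y') (at t)" and f: "f differentiable (at (Y t))"
  shows "((\<lambda>s. f (Y s)) has_real_derivative lin1 f (Y t) Y') (at t)"
proof -
  have y: "(Y has_derivative (\<lambda>s. s *\<^sub>R Y')) (at t)" using Y by (simp add: has_vector_derivative_def)
  have "((f \<circ> Y) has_derivative (lin1 f (Y t) \<circ> (\<lambda>s. s *\<^sub>R Y'))) (at t)"
    by (rule diff_chain_at[OF y has_derivative_lin1[OF f]])
  moreover have "(lin1 f (Y t) \<circ> (\<lambda>s. s *\<^sub>R Y')) = (*) (lin1 f (Y t) Y')"
    by (rule ext) (simp add: linear_cmul[OF linear_lin1[OF f]])
  ultimately show ?thesis by (simp add: has_field_derivative_def o_def)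
qed

lemma lin1_bound:
  fixes f :: "(real^'d) \<times> (real^'d) \<Rightarrow> real"
  shows "\<bar>lin1 f z \<delta>\<bar> \<le> norm \<delta> * ((\<Sum>k\<in>UNIV. \<bar>dirderiv f (axis k 1, 0) z\<bar>) + (\<Sum>k\<in>UNIV. \<bar>dirderiv f (0, axis k 1) z\<bar>))"
proof -
  have c1: "\<bar>fst \<delta> $ k\<bar> \<le> norm \<delta>" for k
    using component_le_norm_cart[of "fst \<delta>" k] norm_fst_le[of "fst \<delta>" "snd \<delta>"] by simp
  have c2: "\<bar>snd \<delta> $ k\<bar> \<le> norm \<delta>" for k
    using component_le_norm_cart[of "snd \<delta>" k] norm_snd_le[where x="fst \<delta>" and y="snd \<delta>"] by simp
  have "\<bar>lin1 f z \<delta>\<bar> \<le> (\<Sum>k\<in>UNIV. \<bar>fst \<delta> $ k * dirderiv f (axis k 1, 0) z\<bar>) + (\<Sum>k\<in>UNIV. \<bar>snd \<delta> $ k * dirderiv f (0, axis k 1) z\<bar>)"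
    unfolding lin1_def by (rule order_trans[OF abs_triangle_ineq add_mono[OF sum_abs sum_abs]])
  also have "\<dots> \<le> (\<Sum>k\<in>UNIV. norm \<delta> * \<bar>dirderiv f (axis k 1, 0) z\<bar>) + (\<Sum>k\<in>UNIV. norm \<delta> * \<bar>dirderiv f (0, axis k 1) z\<bar>)"
    by (intro add_mono sum_mono) (auto simp: abs_mult intro!: mult_right_mono c1 c2)
  finally show ?thesis by (simp add: sum_distrib_left distrib_left)
qed

definition dirs :: "((real^'d) \<times> (real^'d)) set" where
  "dirs = range (\<lambda>k. (axis k 1, 0)) \<union> range (\<lambda>k. (0, axis k 1))"

definition good :: "((real^'d) \<times> (real^'d) \<Rightarrow> real) \<Rightarrow> bool" where
  "good \<phi> \<longleftrightarrow> (\<forall>x. \<phi> differentiable (at x)) \<and> (\<forall>v\<in>dirs. \<forall>x. dirderiv \<phi> v differentiable (at x)) \<and>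
     (\<forall>v\<in>dirs. \<forall>w\<in>dirs. \<forall>x. dirderiv (dirderiv \<phi> v) w differentiable (at x))"

lemma line_hvd: "((\<lambda>\<theta>. y + \<theta> *\<^sub>R \<delta>) has_vector_derivative \<delta>) (at \<theta>)"
  unfolding has_vector_derivative_def by (auto intro!: derivative_eq_intros)

lemma diff_cont_on: "(\<And>x. f differentiable (at x)) \<Longrightarrow> continuous_on S f"
  by (meson continuous_at_imp_continuous_on differentiable_imp_continuous_within)

lemma quad_bound:
  fixes \<phi> :: "(real^'d) \<times> (real^'d) \<Rightarrow> real"
  assumes g: "good \<phi>" and K: "compact K"
  shows "\<exists>M. \<forall>y\<in>K. \<forall>\<delta>. norm \<delta> \<le> 1 \<longrightarrow> \<bar>\<phi> (y + \<delta>) - \<phi> y - lin1 \<phi> y \<delta>\<bar> \<le> M * (norm \<delta>)^2"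
proof -
  define K' where "K' = {a + b | a b. a \<in> K \<and> b \<in> cball (0 :: (real^'d) \<times> (real^'d)) 1}"
  have cK': "compact K'" unfolding K'_def by (rule compact_sums[OF K compact_cball])
  define f where "f v = dirderiv \<phi> v" for v
  define Bv where "Bv v z = (\<Sum>m\<in>UNIV. \<bar>dirderiv (f v) (axis m 1, 0) z\<bar>) + (\<Sum>m\<in>UNIV. \<bar>dirderiv (f v) (0, axis m 1) z\<bar>)" for v z
  define G where "G z = (\<Sum>k\<in>UNIV. Bv (axis k 1, 0) z) + (\<Sum>k\<in>UNIV. Bv (0, axis k 1) z)" for z
  have dirs1: "(axis k 1, 0) \<in> dirs" "(0, axis k 1) \<in> dirs" for k by (auto simp: dirs_def)
  have phid: "\<phi> differentiable (at x)" for x using g unfolding good_def by blast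
  have fd: "f v differentiable (at x)" if "v \<in> dirs" for v x using g that unfolding good_def f_def by blast
  have ffd: "dirderiv (f v) w differentiable (at x)" if "v \<in> dirs" "w \<in> dirs" for v w x
    using g that unfolding good_def f_def by blast
  have cBv: "continuous_on UNIV (Bv v)" if "v \<in> dirs" for v
    unfolding Bv_def
    by (intro continuous_intros diff_cont_on ffd that dirs1)
  have cG: "continuous_on UNIV G"
    unfolding G_def by (intro continuous_intros cBv dirs1)
  have "compact (G ` K')" by (rule compact_continuous_image[OF continuous_on_subset[OF cG] cK']) simp
  then obtain B where B: "\<And>z. z \<in> K' \<Longrightarrow> norm (G z) \<le> B"
    using compact_imp_bounded bounded_iff by (metis imageI)
  show ?thesis
  proof (intro exI ballI allI impI)
    fix y and \<delta> :: "(real^'d) \<times> (real^'d)" assume y: "y \<in> K" and nd: "norm \<delta> \<le> (1::real)"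
    define Z where "Z \<theta> = y + \<theta> *\<^sub>R \<delta>" for \<theta> :: real
    have ZK: "Z \<theta> \<in> K'" if "0 \<le> \<theta>" "\<theta> \<le> 1" for \<theta>
    proof -
      have "norm (\<theta> *\<^sub>R \<delta>) \<le> 1" using that nd by (simp add: mult_le_one)
      then have "\<theta> *\<^sub>R \<delta> \<in> cball 0 1" by (simp add: dist_norm)
      then show ?thesis unfolding K'_def Z_def using y by blast
    qed
    have Zd: "(Z has_vector_derivative \<delta>) (at \<theta>)" for \<theta> unfolding Z_def by (rule line_hvd)
    define \<psi>1 where "\<psi>1 \<theta> = lin1 \<phi> (Z \<theta>) \<delta>" for \<theta>
    define \<psi>2 where "\<psi>2 \<theta> = (\<Sum>k\<in>UNIV. fst \<delta> $ k * lin1 (f (axis k 1, 0)) (Z \<theta>) \<delta>)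
        + (\<Sum>k\<in>UNIV. snd \<delta> $ k * lin1 (f (0, axis k 1)) (Z \<theta>) \<delta>)" for \<theta>
    have d1: "((\<lambda>\<theta>. \<phi> (Z \<theta>)) has_real_derivative \<psi>1 \<theta>) (at \<theta>)" for \<theta>
      unfolding \<psi>1_def by (rule curve_chain[OF Zd phid])
    have d2: "(\<psi>1 has_real_derivative \<psi>2 \<theta>) (at \<theta>)" for \<theta>
    proof -
      have e: "\<psi>1 = (\<lambda>\<theta>. (\<Sum>k\<in>UNIV. fst \<delta> $ k * f (axis k 1, 0) (Z \<theta>)) + (\<Sum>k\<in>UNIV. snd \<delta> $ k * f (0, axis k 1) (Z \<theta>)))"
        by (intro ext) (simp add: \<psi>1_def lin1_def f_def)
      show ?thesis unfolding e \<psi>2_def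
        by (intro DERIV_add DERIV_sum DERIV_cmult curve_chain[OF Zd] fd dirs1)
    qed
    have b2: "\<bar>\<psi>2 \<theta>\<bar> \<le> (norm \<delta>)^2 * G (Z \<theta>)" for \<theta>
    proof -
      have t1: "\<bar>fst \<delta> $ k * lin1 (f (axis k 1, 0)) (Z \<theta>) \<delta>\<bar> \<le> (norm \<delta>)^2 * Bv (axis k 1, 0) (Z \<theta>)" for k
      proof -
        have "\<bar>fst \<delta> $ k\<bar> \<le> norm \<delta>"
          using component_le_norm_cart[of "fst \<delta>" k] norm_fst_le[of "fst \<delta>" "snd \<delta>"] by simp
        moreover have "\<bar>lin1 (f (axis k 1, 0)) (Z \<theta>) \<delta>\<bar> \<le> norm \<delta> * Bv (axis k 1, 0) (Z \<theta>)"
          unfolding Bv_def by (rule lin1_bound)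
        ultimately show ?thesis
          by (simp add: abs_mult power2_eq_square mult.assoc mult_mono)
      qed
      have t2: "\<bar>snd \<delta> $ k * lin1 (f (0, axis k 1)) (Z \<theta>) \<delta>\<bar> \<le> (norm \<delta>)^2 * Bv (0, axis k 1) (Z \<theta>)" for k
      proof -
        have "\<bar>snd \<delta> $ k\<bar> \<le> norm \<delta>"
          using component_le_norm_cart[of "snd \<delta>" k] norm_snd_le[where x="fst \<delta>" and y="snd \<delta>"] by simp
        moreover have "\<bar>lin1 (f (0, axis k 1)) (Z \<theta>) \<delta>\<bar> \<le> norm \<delta> * Bv (0, axis k 1) (Z \<theta>)"
          unfolding Bv_def by (rule lin1_bound)
        ultimately show ?thesis
          by (simp add: abs_mult power2_eq_square mult.assoc mult_mono)
      qed
      have "\<bar>\<psi>2 \<theta>\<bar> \<le> (\<Sum>k\<in>UNIV. \<bar>fst \<delta> $ k * lin1 (f (axis k 1, 0)) (Z \<theta>) \<delta>\<bar>)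
          + (\<Sum>k\<in>UNIV. \<bar>snd \<delta> $ k * lin1 (f (0, axis k 1)) (Z \<theta>) \<delta>\<bar>)"
        unfolding \<psi>2_def by (rule order_trans[OF abs_triangle_ineq add_mono[OF sum_abs sum_abs]])
      also have "\<dots> \<le> (\<Sum>k\<in>UNIV. (norm \<delta>)^2 * Bv (axis k 1, 0) (Z \<theta>)) + (\<Sum>k\<in>UNIV. (norm \<delta>)^2 * Bv (0, axis k 1) (Z \<theta>))"
        by (intro add_mono sum_mono t1 t2)
      also have "\<dots> = (norm \<delta>)^2 * G (Z \<theta>)"
        by (simp add: G_def sum_distrib_left distrib_left)
      finally show ?thesis .
    qed
    obtain \<xi> where \<xi>: "0 < \<xi>" "\<xi> < 1" "\<phi> (Z 1) - \<phi> (Z 0) = (1 - 0) * \<psi>1 \<xi>"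
      using MVT2[of 0 1 "\<lambda>\<theta>. \<phi> (Z \<theta>)" \<psi>1] d1 by auto
    obtain \<eta> where \<eta>: "0 < \<eta>" "\<eta> < \<xi>" "\<psi>1 \<xi> - \<psi>1 0 = (\<xi> - 0) * \<psi>2 \<eta>"
      using MVT2[of 0 \<xi> \<psi>1 \<psi>2] d2 \<xi>(1) by auto
    have "\<bar>\<psi>1 \<xi> - \<psi>1 0\<bar> \<le> \<bar>\<psi>2 \<eta>\<bar>"
      using \<eta> \<xi> by (simp add: abs_mult mult_left_le_one_le)
    also have "\<dots> \<le> (norm \<delta>)^2 * G (Z \<eta>)" by (rule b2)
    also have "\<dots> \<le> (norm \<delta>)^2 * B"
      using B[OF ZK[of \<eta>]] \<eta> \<xi> by (intro mult_left_mono) auto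
    finally have "\<bar>\<psi>1 \<xi> - \<psi>1 0\<bar> \<le> B * (norm \<delta>)^2" by (simp add: mult.commute)
    moreover have "Z 1 = y + \<delta>" "Z 0 = y" by (simp_all add: Z_def)
    moreover have "\<psi>1 0 = lin1 \<phi> y \<delta>" by (simp add: \<psi>1_def Z_def)
    ultimately show "\<bar>\<phi> (y + \<delta>) - \<phi> y - lin1 \<phi> y \<delta>\<bar> \<le> B * (norm \<delta>)^2" using \<xi>(3) by simp
  qed
qed



lemma hvd_fst:
  assumes "((\<lambda>s. (f s, g s)) has_vector_derivative (u, w)) (at t)"
  shows "(f has_vector_derivative u) (at t)"
  using bounded_linear.has_vector_derivative[OF bounded_linear_fst assms] by simp

lemma hvd_snd:
  assumes "((\<lambda>s. (f s, g s)) has_vector_derivative (u, w)) (at t)"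
  shows "(g has_vector_derivative w) (at t)"
  using bounded_linear.has_vector_derivative[OF bounded_linear_snd assms] by simp

lemma DERIV_inner:
  fixes f g :: "real \<Rightarrow> 'a::real_inner"
  assumes "(f has_vector_derivative f') (at s)" "(g has_vector_derivative g') (at s)"
  shows "((\<lambda>s. f s \<bullet> g s) has_real_derivative (f' \<bullet> g s + f s \<bullet> g')) (at s)"
  using bounded_bilinear.has_vector_derivative[OF bounded_bilinear_inner assms]
  by (simp add: has_real_derivative_iff_has_vector_derivative add.commute)

lemma telescope:
  fixes X :: "nat \<Rightarrow> nat \<Rightarrow> real"
  shows "k \<le> m \<Longrightarrow> (\<Sum>l=1..k. (-1) ^ (l+1) * (X (l+1) (m-l) + X l (m+1-l))) = X 1 m - (if k = 0 then X 1 m else 0) + (if k = 0 then 0 else (-1) ^ (k+1) * X (k+1) (m-k))"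
proof (induction k)
  case 0 then show ?case by simp
next
  case (Suc k)
  show ?case
  proof (cases "k = 0")
    case True then show ?thesis by simp
  next
    case False
    have "(\<Sum>l=1..Suc k. (-1) ^ (l+1) * (X (l+1) (m-l) + X l (m+1-l)))
        = (\<Sum>l=1..k. (-1) ^ (l+1) * (X (l+1) (m-l) + X l (m+1-l))) + (-1) ^ (k+2) * (X (k+2) (m-Suc k) + X (Suc k) (m+1-Suc k))"
      by simp
    also have "\<dots> = X 1 m + (-1) ^ (k+1) * X (k+1) (m-k) + (-1) ^ (k+2) * (X (k+2) (m-Suc k) + X (Suc k) (m-k))"
      using Suc False by simp
    also have "\<dots> = X 1 m + (-1) ^ (Suc k + 1) * X (Suc k + 1) (m - Suc k)"
      by (simp add: algebra_simps)
    finally show ?thesis by simp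
  qed
qed

lemma telescope':
  fixes X :: "nat \<Rightarrow> nat \<Rightarrow> real"
  assumes "1 \<le> k" "k \<le> m"
  shows "(\<Sum>l=1..k. (-1) ^ (l+1) * (X (l+1) (m-l) + X l (m+1-l))) = X 1 m + (-1) ^ (k+1) * X (k+1) (m-k)"
  using telescope[OF assms(2), of X] assms(1) by simp

lemma mat_bound:
  fixes M :: "real^'n^'m" and x :: "real^'n"
  shows "norm (M *v x) \<le> (\<Sum>i\<in>UNIV. \<Sum>k\<in>UNIV. \<bar>M $ i $ k\<bar>) * norm x"
proof -
  have "norm (M *v x) \<le> (\<Sum>i\<in>UNIV. \<bar>(M *v x) $ i\<bar>)" by (rule norm_le_l1_cart)
  also have "\<dots> \<le> (\<Sum>i\<in>UNIV. (\<Sum>k\<in>UNIV. \<bar>M $ i $ k\<bar>) * norm x)"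
  proof (rule sum_mono)
    fix i
    have "\<bar>(M *v x) $ i\<bar> = \<bar>\<Sum>k\<in>UNIV. M $ i $ k * x $ k\<bar>" by (simp add: matrix_vector_mult_def)
    also have "\<dots> \<le> (\<Sum>k\<in>UNIV. \<bar>M $ i $ k\<bar> * \<bar>x $ k\<bar>)" by (rule order_trans[OF sum_abs]) (simp add: abs_mult)
    also have "\<dots> \<le> (\<Sum>k\<in>UNIV. \<bar>M $ i $ k\<bar> * norm x)"
      by (intro sum_mono mult_left_mono component_le_norm_cart) simp
    finally show "\<bar>(M *v x) $ i\<bar> \<le> (\<Sum>k\<in>UNIV. \<bar>M $ i $ k\<bar>) * norm x" by (simp add: sum_distrib_right)
  qed
  finally show ?thesis by (simp add: sum_distrib_right)
qed

lemma alg_id: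
  fixes P N Lp Ln RP RN Wp Wq :: "'a::real_inner"
  shows "(P + Lp + RP) \<bullet> (N + Ln - Wp) - (N + Ln + RN) \<bullet> (P + Lp - Wq)
     = - (P \<bullet> Wp) + N \<bullet> Wq - Lp \<bullet> Wp + Ln \<bullet> Wq + RP \<bullet> (N + Ln - Wp) - RN \<bullet> (P + Lp - Wq)"
  by (simp add: inner_add_left inner_add_right inner_diff_left inner_diff_right inner_commute algebra_simps)

lemma sum_pow_bound:
  fixes v :: "nat \<Rightarrow> 'a::real_normed_vector"
  assumes h: "0 < h" "h \<le> 1" and J: "\<And>j. j \<in> J \<Longrightarrow> r \<le> j"
  shows "norm (\<Sum>j\<in>J. h ^ j *\<^sub>R v j) \<le> h ^ r * (\<Sum>j\<in>J. norm (v j))"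
proof -
  have "norm (\<Sum>j\<in>J. h ^ j *\<^sub>R v j) \<le> (\<Sum>j\<in>J. norm (h ^ j *\<^sub>R v j))" by (rule norm_sum)
  also have "\<dots> \<le> (\<Sum>j\<in>J. h ^ r * norm (v j))"
  proof (rule sum_mono)
    fix j assume "j \<in> J"
    then have "h ^ j \<le> h ^ r" using J h by (intro power_decreasing) auto
    then show "norm (h ^ j *\<^sub>R v j) \<le> h ^ r * norm (v j)" using h by (simp add: mult_right_mono)
  qed
  finally show ?thesis by (simp add: sum_distrib_left)
qed

lemma cont_bound:
  fixes g :: "real \<Rightarrow> real"
  assumes "compact I" "continuous_on I g"
  shows "\<exists>B. \<forall>s\<in>I. g s \<le> B"
proof -
  have "compact (g ` I)" by (rule compact_continuous_image[OF assms(2,1)])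
  then obtain B where "\<forall>x\<in>g ` I. norm x \<le> B" using compact_imp_bounded bounded_iff by metis
  then show ?thesis by (metis image_eqI real_norm_def abs_le_D1)
qed

lemma dirs_Basis: "dirs \<subseteq> (Basis :: ((real^'d) \<times> (real^'d)) set)"
  unfolding dirs_def Basis_prod_def by auto

lemma smooth_iter:
  fixes H :: "(real^'d) \<times> (real^'d) \<Rightarrow> real"
  assumes "smooth H" "set vs \<subseteq> dirs"
  shows "iter_dirderiv H vs differentiable (at x)"
  using assms dirs_Basis unfolding smooth_def by blast

lemma good_grad:
  fixes H :: "(real^'d) \<times> (real^'d) \<Rightarrow> real"
  assumes H: "smooth H" and v0: "v0 \<in> dirs"
  shows "good (dirderiv H v0)"
proof -
  have "iter_dirderiv H [v0] differentiable (at x)" for x using smooth_iter[OF H, of "[v0]"] v0 by simp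
  moreover have "iter_dirderiv H [v, v0] differentiable (at x)" if "v \<in> dirs" for v x
    using smooth_iter[OF H, of "[v, v0]"] v0 that by simp
  moreover have "iter_dirderiv H [w, v, v0] differentiable (at x)" if "v \<in> dirs" "w \<in> dirs" for v w x
    using smooth_iter[OF H, of "[w, v, v0]"] v0 that by simp
  ultimately show ?thesis unfolding good_def by simp
qed

lemma good_neg:
  assumes g: "good \<phi>"
  shows "good (\<lambda>x. - \<phi> x)"
proof -
  have d0: "\<phi> differentiable (at x)" for x using g unfolding good_def by blast
  have d1: "dirderiv \<phi> v differentiable (at x)" if "v \<in> dirs" for v x using g that unfolding good_def by blast
  have d2: "dirderiv (dirderiv \<phi> v) w differentiable (at x)" if "v \<in> dirs" "w \<in> dirs" for v w x
    using g that unfolding good_def by blast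
  have e1: "dirderiv (\<lambda>x. - \<phi> x) v = (\<lambda>x. - dirderiv \<phi> v x)" for v
    by (rule ext) (rule dirderiv_neg[OF d0])
  have e2: "dirderiv (\<lambda>x. - dirderiv \<phi> v x) w = (\<lambda>x. - dirderiv (dirderiv \<phi> v) w x)" if "v \<in> dirs" for v w
    by (rule ext) (rule dirderiv_neg[OF d1[OF that]])
  show ?thesis unfolding good_def e1
    using d0 d1 d2 e2 by (auto intro!: differentiable_minus)
qed



lemma lin1_jac:
  fixes F :: "(real^'d) \<times> (real^'d) \<Rightarrow> real^'d"
  shows "lin1 (\<lambda>x. F x $ i) z (u, w) = (jac_p F z *v u + jac_q F z *v w) $ i"
  by (simp add: lin1_def jac_p_def jac_q_def matrix_vector_mult_def mult.commute)

lemma lin1_grad: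
  fixes H :: "(real^'d) \<times> (real^'d) \<Rightarrow> real"
  shows "lin1 H z (u, w) = grad_p H z \<bullet> u + grad_q H z \<bullet> w"
  by (simp add: lin1_def grad_p_def grad_q_def inner_vec_def mult.commute)

lemma term_deriv:
  fixes a b :: "nat \<Rightarrow> real \<Rightarrow> 'a::real_inner"
  assumes ad: "\<And>n. (a n has_vector_derivative a (Suc n) s) (at s)"
    and bd: "\<And>n. (b n has_vector_derivative b (Suc n) s) (at s)"
    and k: "1 \<le> k"
  shows "((\<lambda>s. \<Sum>l=1..k. (-1) ^ (l+1) * (a l s \<bullet> b (2*k+1-l) s - c l)) has_real_derivative
           (a 1 s \<bullet> b (2*k+1) s + (-1) ^ (k+1) * (a (k+1) s \<bullet> b (k+1) s))) (at s)"
proof -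
  have "((\<lambda>s. \<Sum>l=1..k. (-1) ^ (l+1) * (a l s \<bullet> b (2*k+1-l) s - c l)) has_real_derivative
           (\<Sum>l=1..k. (-1) ^ (l+1) * ((a (Suc l) s \<bullet> b (2*k+1-l) s + a l s \<bullet> b (Suc (2*k+1-l)) s) - 0))) (at s)"
    by (intro DERIV_sum DERIV_cmult DERIV_diff DERIV_const DERIV_inner ad bd)
  also have "(\<Sum>l=1..k. (-1) ^ (l+1) * ((a (Suc l) s \<bullet> b (2*k+1-l) s + a l s \<bullet> b (Suc (2*k+1-l)) s) - 0))
      = (\<Sum>l=1..k. (-1) ^ (l+1) * ((\<lambda>l m. a l s \<bullet> b m s) (l+1) ((2*k+1)-l) + (\<lambda>l m. a l s \<bullet> b m s) l ((2*k+1)+1-l)))"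
    by (intro sum.cong refl) (auto simp: Suc_diff_le)
  also have "\<dots> = a 1 s \<bullet> b (2*k+1) s + (-1) ^ (k+1) * (a (k+1) s \<bullet> b (2*k+1-k) s)"
    by (rule telescope'[where X="\<lambda>l m. a l s \<bullet> b m s"]) (use k in auto)
  also have "2*k+1-k = k+1" by simp
  finally show ?thesis by simp
qed

lemma err_bound:
  fixes Lp Wp Ln Wq RP RN php qhp :: "'a::real_inner"
  assumes "norm Lp \<le> e * a1" "norm Wp \<le> e * a2" "norm Ln \<le> e * a3" "norm Wq \<le> e * a4"
    "norm RP \<le> e * e * a5" "norm RN \<le> e * e * a5" "norm php \<le> a6" "norm qhp \<le> a7"
    "0 \<le> e"
  shows "\<bar>- (Lp \<bullet> Wp) + Ln \<bullet> Wq + RP \<bullet> php - RN \<bullet> qhp\<bar> \<le> e * e * (a1 * a2 + a3 * a4 + a5 * a6 + a5 * a7)"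
proof -
  have i1: "\<bar>Lp \<bullet> Wp\<bar> \<le> (e * a1) * (e * a2)"
    using Cauchy_Schwarz_ineq2[of Lp Wp] assms(1,2) by (meson mult_mono' norm_ge_zero order_trans)
  have i2: "\<bar>Ln \<bullet> Wq\<bar> \<le> (e * a3) * (e * a4)"
    using Cauchy_Schwarz_ineq2[of Ln Wq] assms(3,4) by (meson mult_mono' norm_ge_zero order_trans)
  have i3: "\<bar>RP \<bullet> php\<bar> \<le> (e * e * a5) * a6"
    using Cauchy_Schwarz_ineq2[of RP php] assms(5,7) by (meson mult_mono' norm_ge_zero order_trans)
  have i4: "\<bar>RN \<bullet> qhp\<bar> \<le> (e * e * a5) * a7"
    using Cauchy_Schwarz_ineq2[of RN qhp] assms(6,8) by (meson mult_mono' norm_ge_zero order_trans)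
  have "\<bar>- (Lp \<bullet> Wp) + Ln \<bullet> Wq + RP \<bullet> php - RN \<bullet> qhp\<bar> \<le> \<bar>Lp \<bullet> Wp\<bar> + \<bar>Ln \<bullet> Wq\<bar> + \<bar>RP \<bullet> php\<bar> + \<bar>RN \<bullet> qhp\<bar>"
    by linarith
  also have "\<dots> \<le> (e * a1) * (e * a2) + (e * a3) * (e * a4) + (e * e * a5) * a6 + (e * e * a5) * a7"
    using i1 i2 i3 i4 by linarith
  also have "\<dots> = e * e * (a1 * a2 + a3 * a4 + a5 * a6 + a5 * a7)" by (simp add: algebra_simps)
  finally show ?thesis .
qed

lemma mv_sum:
  fixes M :: "real^'n^'m"
  shows "M *v (\<Sum>j\<in>J. c j *\<^sub>R v j) = (\<Sum>j\<in>J. c j *\<^sub>R (M *v v j))"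
  by (simp add: linear_sum[OF matrix_vector_mul_linear] linear_cmul[OF matrix_vector_mul_linear])

lemma even_reindex:
  fixes g :: "nat \<Rightarrow> real"
  assumes r: "even r" and z: "\<And>j. r \<le> j \<Longrightarrow> j < 2 * r \<Longrightarrow> odd j \<Longrightarrow> g j = 0"
  shows "(\<Sum>j\<in>{r..<2*r}. g j) = (\<Sum>k\<in>{r div 2..<r}. g (2 * k))"
proof -
  have inj: "inj_on (\<lambda>k::nat. 2 * k) {r div 2..<r}" by (auto simp: inj_on_def)
  have img: "(\<lambda>k. 2 * k) ` {r div 2..<r} = {j \<in> {r..<2*r}. even j}"
  proof
    show "(\<lambda>k. 2 * k) ` {r div 2..<r} \<subseteq> {j \<in> {r..<2*r}. even j}" using r by auto
    show "{j \<in> {r..<2*r}. even j} \<subseteq> (\<lambda>k. 2 * k) ` {r div 2..<r}"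
    proof
      fix j assume j: "j \<in> {j \<in> {r..<2*r}. even j}"
      then have "j = 2 * (j div 2)" by auto
      moreover have "j div 2 \<in> {r div 2..<r}" using j r by auto
      ultimately show "j \<in> (\<lambda>k. 2 * k) ` {r div 2..<r}" by blast
    qed
  qed
  have "(\<Sum>k\<in>{r div 2..<r}. g (2 * k)) = sum g ((\<lambda>k. 2 * k) ` {r div 2..<r})"
    by (simp add: sum.reindex[OF inj])
  also have "\<dots> = sum g {j \<in> {r..<2*r}. even j}" by (simp add: img)
  also have "\<dots> = sum g {r..<2*r}"
    by (rule sum.mono_neutral_left) (auto intro: z)
  finally show ?thesis by simp
qed

lemma mn_cont:
  fixes F :: "(real^'d) \<times> (real^'d) \<Rightarrow> real^'d"
  assumes g: "\<And>i. good (\<lambda>x. F x $ i)" and y: "isCont y s"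
  shows "isCont (\<lambda>s. \<Sum>i\<in>UNIV. \<Sum>k\<in>UNIV. \<bar>jac_p F (y s) $ i $ k\<bar>) s"
    and "isCont (\<lambda>s. \<Sum>i\<in>UNIV. \<Sum>k\<in>UNIV. \<bar>jac_q F (y s) $ i $ k\<bar>) s"
proof -
  have dirs1: "(axis k 1, 0) \<in> dirs" "(0, axis k 1) \<in> dirs" for k by (auto simp: dirs_def)
  have c: "isCont (\<lambda>s. dirderiv (\<lambda>x. F x $ i) v (y s)) s" if "v \<in> dirs" for i v
  proof -
    have "dirderiv (\<lambda>x. F x $ i) v differentiable (at z)" for z using g[of i] that unfolding good_def by blast
    then have "isCont (dirderiv (\<lambda>x. F x $ i) v) (y s)" by (rule differentiable_imp_continuous_within)
    then show ?thesis by (rule isCont_o2[OF y])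
  qed
  show "isCont (\<lambda>s. \<Sum>i\<in>UNIV. \<Sum>k\<in>UNIV. \<bar>jac_p F (y s) $ i $ k\<bar>) s"
    unfolding jac_p_def by (simp, intro continuous_intros c dirs1)
  show "isCont (\<lambda>s. \<Sum>i\<in>UNIV. \<Sum>k\<in>UNIV. \<bar>jac_q F (y s) $ i $ k\<bar>) s"
    unfolding jac_q_def by (simp, intro continuous_intros c dirs1)
qed




theorem theorem3:
  fixes H :: "(real^'d) \<times> (real^'d) \<Rightarrow> real"
    and p q :: "real \<Rightarrow> real^'d"
    and p0 q0 :: "real^'d"
    and a b t0 :: real
    and \<rho>p \<sigma>p \<rho>q \<sigma>q :: "real poly"
    and r :: nat
    and cp cq :: "nat \<Rightarrow> real"
    and ep eq :: "nat \<Rightarrow> real \<Rightarrow> real^'d"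
  assumes H_smooth: "smooth H"
    and t0_in: "a < t0" "t0 < b"
    and p_smooth: "smooth_on_real {a<..<b} p"
    and q_smooth: "smooth_on_real {a<..<b} q"
    and p_ode: "\<And>t. t \<in> {a<..<b} \<Longrightarrow> (p has_vector_derivative (- grad_q H (p t, q t))) (at t)"
    and q_ode: "\<And>t. t \<in> {a<..<b} \<Longrightarrow> (q has_vector_derivative (grad_p H (p t, q t))) (at t)"
    and p_init: "p t0 = p0" and q_init: "q t0 = q0"
    and meth_p: "lmm \<rho>p \<sigma>p" "zero_stable \<rho>p" "lmm_order \<rho>p \<sigma>p r" "symmetric_lmm \<rho>p \<sigma>p"
    and meth_q: "lmm \<rho>q \<sigma>q" "zero_stable \<rho>q" "lmm_order \<rho>q \<sigma>q r" "symmetric_lmm \<rho>q \<sigma>q"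
    and lte_p: "lte_constants \<rho>p \<sigma>p r cp"
    and lte_q: "lte_constants \<rho>q \<sigma>q r cq"
    and e_ode: "\<And>j t. j \<in> {r..<2*r} \<Longrightarrow> t \<in> {a<..<b} \<Longrightarrow>
        ((\<lambda>s. (ep j s, eq j s)) has_vector_derivative
          (jac_p (\<lambda>x. - grad_q H x) (p t, q t) *v ep j t
             + jac_q (\<lambda>x. - grad_q H x) (p t, q t) *v eq j t - cp j *\<^sub>R vderiv_n (j + 1) p t,
           jac_p (\<lambda>x. grad_p H x) (p t, q t) *v ep j t
             + jac_q (\<lambda>x. grad_p H x) (p t, q t) *v eq j t - cq j *\<^sub>R vderiv_n (j + 1) q t)) (at t)"
  shows "\<forall>T\<in>{t0..<b}. \<exists>C h0. h0 > 0 \<and> (\<forall>h t. 0 < h \<and> h \<le> h0 \<and> t \<in> {t0..T} \<longrightarrow>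
     (let ph = (\<lambda>s. p s + (\<Sum>j\<in>{r..<2*r}. h ^ j *\<^sub>R ep j s));
          qh = (\<lambda>s. q s + (\<Sum>j\<in>{r..<2*r}. h ^ j *\<^sub>R eq j s))
      in \<bar>(H (ph t, qh t) - H (ph t0, qh t0))
          - ((\<Sum>k\<in>{r div 2..<r}. h ^ (2*k) *
               (cq (2*k) * (\<Sum>l=1..k. (-1) ^ (l+1) *
                    (vderiv_n l p t \<bullet> vderiv_n (2*k+1-l) q t - vderiv_n l p t0 \<bullet> vderiv_n (2*k+1-l) q t0))
              - cp (2*k) * (\<Sum>l=1..k. (-1) ^ (l+1) *
                    (vderiv_n l q t \<bullet> vderiv_n (2*k+1-l) p t - vderiv_n l q t0 \<bullet> vderiv_n (2*k+1-l) p t0))))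
             + (\<Sum>k\<in>{r div 2..<r}. h ^ (2*k) * (-1) ^ (k+2) * (cq (2*k) - cp (2*k)) *
                  integral {t0..t} (\<lambda>s. vderiv_n (k+1) p s \<bullet> vderiv_n (k+1) q s)))\<bar>
         \<le> C * (t - t0) * h ^ (2*r)))"
proof -
  have r_even: "even r" and cp_odd: "\<And>j. r \<le> j \<Longrightarrow> j < 2*r \<Longrightarrow> odd j \<Longrightarrow> cp j = 0"
    using sym_lmm_consts[OF meth_p(1) meth_p(3) meth_p(4) lte_p] by auto
  have cq_odd: "\<And>j. r \<le> j \<Longrightarrow> j < 2*r \<Longrightarrow> odd j \<Longrightarrow> cq j = 0"
    using sym_lmm_consts[OF meth_q(1) meth_q(3) meth_q(4) lte_q] by auto
  define J where "J = {r..<2*r}"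
  define KK where "KK = {r div 2..<r}"
  define y where "y s = (p s, q s)" for s
  define mn :: "real^'d^'d \<Rightarrow> real" where "mn M = (\<Sum>i\<in>UNIV. \<Sum>k\<in>UNIV. \<bar>M $ i $ k\<bar>)" for M
  have mn0: "0 \<le> mn M" for M unfolding mn_def by (intro sum_nonneg) auto
  have pdiff: "vderiv_n n p differentiable (at s)" if "s \<in> {a<..<b}" for n s
    using p_smooth that unfolding smooth_on_real_def by blast
  have qdiff: "vderiv_n n q differentiable (at s)" if "s \<in> {a<..<b}" for n s
    using q_smooth that unfolding smooth_on_real_def by blast
  have pvd: "(vderiv_n n p has_vector_derivative vderiv_n (Suc n) p s) (at s)" if "s \<in> {a<..<b}" for n s
    using pdiff[OF that, of n] by (simp add: vector_derivative_works)
  have qvd: "(vderiv_n n q has_vector_derivative vderiv_n (Suc n) q s) (at s)" if "s \<in> {a<..<b}" for n s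
    using qdiff[OF that, of n] by (simp add: vector_derivative_works)
  have p1: "vderiv_n 1 p s = - grad_q H (p s, q s)" if "s \<in> {a<..<b}" for s
    using vector_derivative_at[OF p_ode[OF that]] by simp
  have q1: "vderiv_n 1 q s = grad_p H (p s, q s)" if "s \<in> {a<..<b}" for s
    using vector_derivative_at[OF q_ode[OF that]] by simp
  have epd: "(ep j has_vector_derivative (jac_p (\<lambda>x. - grad_q H x) (p s, q s) *v ep j s
             + jac_q (\<lambda>x. - grad_q H x) (p s, q s) *v eq j s - cp j *\<^sub>R vderiv_n (j + 1) p s)) (at s)"
    if "j \<in> J" "s \<in> {a<..<b}" for j s
    using hvd_fst[OF e_ode[OF that(1)[unfolded J_def] that(2)]] .
  have eqd: "(eq j has_vector_derivative (jac_p (\<lambda>x. grad_p H x) (p s, q s) *v ep j s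
             + jac_q (\<lambda>x. grad_p H x) (p s, q s) *v eq j s - cq j *\<^sub>R vderiv_n (j + 1) q s)) (at s)"
    if "j \<in> J" "s \<in> {a<..<b}" for j s
    using hvd_snd[OF e_ode[OF that(1)[unfolded J_def] that(2)]] .
  have ep_c: "isCont (ep j) s" if "j \<in> J" "s \<in> {a<..<b}" for j s
    using has_vector_derivative_continuous[OF epd[OF that]] .
  have eq_c: "isCont (eq j) s" if "j \<in> J" "s \<in> {a<..<b}" for j s
    using has_vector_derivative_continuous[OF eqd[OF that]] .
  have pv_c: "isCont (vderiv_n n p) s" if "s \<in> {a<..<b}" for n s
    using has_vector_derivative_continuous[OF pvd[OF that]] .
  have qv_c: "isCont (vderiv_n n q) s" if "s \<in> {a<..<b}" for n s
    using has_vector_derivative_continuous[OF qvd[OF that]] .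
  have y_c: "isCont y s" if "s \<in> {a<..<b}" for s
    using pv_c[OF that, of 0] qv_c[OF that, of 0] unfolding y_def by (simp add: continuous_Pair)
  have gP: "good (\<lambda>x. grad_p H x $ i)" for i
  proof -
    have "(\<lambda>x. grad_p H x $ i) = dirderiv H (axis i 1, 0)" by (rule ext) (simp add: grad_p_def)
    then show ?thesis using good_grad[OF H_smooth, of "(axis i 1, 0)"] by (simp add: dirs_def)
  qed
  have gN: "good (\<lambda>x. (- grad_q H x) $ i)" for i
  proof -
    have "(\<lambda>x. (- grad_q H x) $ i) = (\<lambda>x. - dirderiv H (0, axis i 1) x)" by (rule ext) (simp add: grad_q_def)
    then show ?thesis using good_neg[OF good_grad[OF H_smooth, of "(0, axis i 1)"]] by (simp add: dirs_def)
  qed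
  have Hd: "H differentiable (at z)" for z using smooth_iter[OF H_smooth, of "[]"] by simp
  show ?thesis
  proof (intro ballI)
    fix T assume T: "T \<in> {t0..<b}"
    define I where "I = {t0..T}"
    have IS: "I \<subseteq> {a<..<b}" using T t0_in by (auto simp: I_def)
    have cI: "compact I" by (simp add: I_def)
    define K where "K = y ` I"
    have cK: "compact K" unfolding K_def
      by (rule compact_continuous_image[OF continuous_at_imp_continuous_on cI]) (use y_c IS in auto)
    have "\<forall>i. \<exists>M. \<forall>z\<in>K. \<forall>\<delta>. norm \<delta> \<le> 1 \<longrightarrow> \<bar>grad_p H (z + \<delta>) $ i - grad_p H z $ i - lin1 (\<lambda>x. grad_p H x $ i) z \<delta>\<bar> \<le> M * (norm \<delta>)^2"
      using quad_bound[OF gP cK] by blast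
    then obtain MP where MP: "\<And>i z \<delta>. z \<in> K \<Longrightarrow> norm \<delta> \<le> 1 \<Longrightarrow> \<bar>grad_p H (z + \<delta>) $ i - grad_p H z $ i - lin1 (\<lambda>x. grad_p H x $ i) z \<delta>\<bar> \<le> MP i * (norm \<delta>)^2"
      by metis
    have "\<forall>i. \<exists>M. \<forall>z\<in>K. \<forall>\<delta>. norm \<delta> \<le> 1 \<longrightarrow> \<bar>(- grad_q H (z + \<delta>)) $ i - (- grad_q H z) $ i - lin1 (\<lambda>x. (- grad_q H x) $ i) z \<delta>\<bar> \<le> M * (norm \<delta>)^2"
      using quad_bound[OF gN cK] by blast
    then obtain MN where MN: "\<And>i z \<delta>. z \<in> K \<Longrightarrow> norm \<delta> \<le> 1 \<Longrightarrow> \<bar>(- grad_q H (z + \<delta>)) $ i - (- grad_q H z) $ i - lin1 (\<lambda>x. (- grad_q H x) $ i) z \<delta>\<bar> \<le> MN i * (norm \<delta>)^2"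
      by metis
    define M where "M = (\<Sum>i\<in>UNIV. \<bar>MP i\<bar>) + (\<Sum>i\<in>UNIV. \<bar>MN i\<bar>)"
    have M0: "0 \<le> M" unfolding M_def by (intro add_nonneg_nonneg sum_nonneg) auto
    have MPM: "MP i \<le> M" for i
    proof -
      have "\<bar>MP i\<bar> \<le> (\<Sum>i\<in>UNIV. \<bar>MP i\<bar>)" by (rule member_le_sum) auto
      moreover have "0 \<le> (\<Sum>i\<in>UNIV. \<bar>MN i\<bar>)" by (intro sum_nonneg) auto
      ultimately show ?thesis unfolding M_def by linarith
    qed
    have MNM: "MN i \<le> M" for i
    proof -
      have "\<bar>MN i\<bar> \<le> (\<Sum>i\<in>UNIV. \<bar>MN i\<bar>)" by (rule member_le_sum) auto
      moreover have "0 \<le> (\<Sum>i\<in>UNIV. \<bar>MP i\<bar>)" by (intro sum_nonneg) auto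
      ultimately show ?thesis unfolding M_def by linarith
    qed
    define \<epsilon>p where "\<epsilon>p s = (\<Sum>j\<in>J. norm (ep j s))" for s
    define \<epsilon>q where "\<epsilon>q s = (\<Sum>j\<in>J. norm (eq j s))" for s
    define \<omega>p where "\<omega>p s = (\<Sum>j\<in>J. norm (cp j *\<^sub>R vderiv_n (j + 1) p s))" for s
    define \<omega>q where "\<omega>q s = (\<Sum>j\<in>J. norm (cq j *\<^sub>R vderiv_n (j + 1) q s))" for s
    define mA where "mA s = mn (jac_p (\<lambda>x. - grad_q H x) (y s))" for s
    define mB where "mB s = mn (jac_q (\<lambda>x. - grad_q H x) (y s))" for s
    define mC where "mC s = mn (jac_p (\<lambda>x. grad_p H x) (y s))" for s
    define mD where "mD s = mn (jac_q (\<lambda>x. grad_p H x) (y s))" for s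
    define \<epsilon> where "\<epsilon> s = \<epsilon>p s + \<epsilon>q s" for s
    define a1 where "a1 s = mC s * \<epsilon>p s + mD s * \<epsilon>q s" for s
    define a3 where "a3 s = mA s * \<epsilon>p s + mB s * \<epsilon>q s" for s
    define a5 where "a5 s = real CARD('d) * M * (\<epsilon> s)^2" for s
    define a6 where "a6 s = norm (vderiv_n 1 p s) + a3 s + \<omega>p s" for s
    define a7 where "a7 s = norm (vderiv_n 1 q s) + a1 s + \<omega>q s" for s
    define Gs where "Gs s = a1 s * \<omega>p s + a3 s * \<omega>q s + a5 s * a6 s + a5 s * a7 s" for s
    have c\<epsilon>p: "isCont \<epsilon>p s" if "s \<in> {a<..<b}" for s
      unfolding \<epsilon>p_def by (intro continuous_intros) (use ep_c that in auto)
    have c\<epsilon>q: "isCont \<epsilon>q s" if "s \<in> {a<..<b}" for s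
      unfolding \<epsilon>q_def by (intro continuous_intros) (use eq_c that in auto)
    have c\<omega>p: "isCont \<omega>p s" if "s \<in> {a<..<b}" for s
      unfolding \<omega>p_def by (intro continuous_intros pv_c that)
    have c\<omega>q: "isCont \<omega>q s" if "s \<in> {a<..<b}" for s
      unfolding \<omega>q_def by (intro continuous_intros qv_c that)
    have cmA: "isCont mA s" if "s \<in> {a<..<b}" for s
      unfolding mA_def mn_def by (rule mn_cont(1)[OF gN y_c[OF that]])
    have cmB: "isCont mB s" if "s \<in> {a<..<b}" for s
      unfolding mB_def mn_def by (rule mn_cont(2)[OF gN y_c[OF that]])
    have cmC: "isCont mC s" if "s \<in> {a<..<b}" for s
      unfolding mC_def mn_def by (rule mn_cont(1)[OF gP y_c[OF that]])
    have cmD: "isCont mD s" if "s \<in> {a<..<b}" for s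
      unfolding mD_def mn_def by (rule mn_cont(2)[OF gP y_c[OF that]])
    have cGs: "continuous_on I Gs"
    proof (intro continuous_at_imp_continuous_on ballI)
      fix s assume "s \<in> I"
      then have s: "s \<in> {a<..<b}" using IS by auto
      show "isCont Gs s" unfolding Gs_def a1_def a3_def a5_def a6_def a7_def \<epsilon>_def
        by (intro continuous_intros c\<epsilon>p c\<epsilon>q c\<omega>p c\<omega>q cmA cmB cmC cmD pv_c qv_c s)
    qed
    have c\<epsilon>: "continuous_on I \<epsilon>"
      unfolding \<epsilon>_def by (intro continuous_at_imp_continuous_on ballI continuous_intros c\<epsilon>p c\<epsilon>q) (use IS in auto)
    obtain Emax where Emax: "\<And>s. s \<in> I \<Longrightarrow> \<epsilon> s \<le> Emax" using cont_bound[OF cI c\<epsilon>] by blast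
    obtain Gmax where Gmax: "\<And>s. s \<in> I \<Longrightarrow> Gs s \<le> Gmax" using cont_bound[OF cI cGs] by blast
    define h0 where "h0 = 1 / (\<bar>Emax\<bar> + 1)"
    have h00: "0 < h0" "h0 \<le> 1" unfolding h0_def by auto
    show "\<exists>C h0. h0 > 0 \<and> (\<forall>h t. 0 < h \<and> h \<le> h0 \<and> t \<in> {t0..T} \<longrightarrow>
     (let ph = (\<lambda>s. p s + (\<Sum>j\<in>{r..<2*r}. h ^ j *\<^sub>R ep j s));
          qh = (\<lambda>s. q s + (\<Sum>j\<in>{r..<2*r}. h ^ j *\<^sub>R eq j s))
      in \<bar>(H (ph t, qh t) - H (ph t0, qh t0))
          - ((\<Sum>k\<in>{r div 2..<r}. h ^ (2*k) *
               (cq (2*k) * (\<Sum>l=1..k. (-1) ^ (l+1) *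
                    (vderiv_n l p t \<bullet> vderiv_n (2*k+1-l) q t - vderiv_n l p t0 \<bullet> vderiv_n (2*k+1-l) q t0))
              - cp (2*k) * (\<Sum>l=1..k. (-1) ^ (l+1) *
                    (vderiv_n l q t \<bullet> vderiv_n (2*k+1-l) p t - vderiv_n l q t0 \<bullet> vderiv_n (2*k+1-l) p t0))))
             + (\<Sum>k\<in>{r div 2..<r}. h ^ (2*k) * (-1) ^ (k+2) * (cq (2*k) - cp (2*k)) *
                  integral {t0..t} (\<lambda>s. vderiv_n (k+1) p s \<bullet> vderiv_n (k+1) q s)))\<bar>
         \<le> C * (t - t0) * h ^ (2*r)))"
    proof (rule exI[of _ Gmax], rule exI[of _ h0], intro conjI allI impI)
      show "0 < h0" by (rule h00)
      fix h t assume ht: "0 < h \<and> h \<le> h0 \<and> t \<in> {t0..T}"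
      then have h: "0 < h" "h \<le> 1" and tI: "t \<in> I" and htt: "t0 \<le> t" using h00 by (auto simp: I_def)
      have hh0: "h \<le> h0" using ht by simp
      define dp where "dp s = (\<Sum>j\<in>J. h ^ j *\<^sub>R ep j s)" for s
      define dq where "dq s = (\<Sum>j\<in>J. h ^ j *\<^sub>R eq j s)" for s
      define ph where "ph s = p s + dp s" for s
      define qh where "qh s = q s + dq s" for s
      define Wp where "Wp s = (\<Sum>j\<in>J. h ^ j *\<^sub>R (cp j *\<^sub>R vderiv_n (j + 1) p s))" for s
      define Wq where "Wq s = (\<Sum>j\<in>J. h ^ j *\<^sub>R (cq j *\<^sub>R vderiv_n (j + 1) q s))" for s
      define A where "A s = jac_p (\<lambda>x. - grad_q H x) (p s, q s)" for s
      define B where "B s = jac_q (\<lambda>x. - grad_q H x) (p s, q s)" for s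
      define C where "C s = jac_p (\<lambda>x. grad_p H x) (p s, q s)" for s
      define D where "D s = jac_q (\<lambda>x. grad_p H x) (p s, q s)" for s
      define Lp where "Lp s = C s *v dp s + D s *v dq s" for s
      define Ln where "Ln s = A s *v dp s + B s *v dq s" for s
      define php where "php s = vderiv_n 1 p s + (\<Sum>j\<in>J. h ^ j *\<^sub>R (A s *v ep j s + B s *v eq j s - cp j *\<^sub>R vderiv_n (j + 1) p s))" for s
      define qhp where "qhp s = vderiv_n 1 q s + (\<Sum>j\<in>J. h ^ j *\<^sub>R (C s *v ep j s + D s *v eq j s - cq j *\<^sub>R vderiv_n (j + 1) q s))" for s
      define RP where "RP s = grad_p H (ph s, qh s) - grad_p H (p s, q s) - Lp s" for s
      define RN where "RN s = (- grad_q H (ph s, qh s)) - (- grad_q H (p s, q s)) - Ln s" for s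
      define E where "E s = - (Lp s \<bullet> Wp s) + Ln s \<bullet> Wq s + RP s \<bullet> php s - RN s \<bullet> qhp s" for s
      define Mx where "Mx s = (\<Sum>k\<in>KK. h ^ (2*k) *
               (cq (2*k) * (\<Sum>l=1..k. (-1) ^ (l+1) *
                    (vderiv_n l p s \<bullet> vderiv_n (2*k+1-l) q s - vderiv_n l p t0 \<bullet> vderiv_n (2*k+1-l) q t0))
              - cp (2*k) * (\<Sum>l=1..k. (-1) ^ (l+1) *
                    (vderiv_n l q s \<bullet> vderiv_n (2*k+1-l) p s - vderiv_n l q t0 \<bullet> vderiv_n (2*k+1-l) p t0))))
             + (\<Sum>k\<in>KK. h ^ (2*k) * (-1) ^ (k+2) * (cq (2*k) - cp (2*k)) *
                  integral {t0..s} (\<lambda>s. vderiv_n (k+1) p s \<bullet> vderiv_n (k+1) q s))" for s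
      define Mxd where "Mxd s = (\<Sum>k\<in>KK. h ^ (2*k) * (cq (2*k) * (vderiv_n 1 p s \<bullet> vderiv_n (2*k+1) q s)
          - cp (2*k) * (vderiv_n 1 q s \<bullet> vderiv_n (2*k+1) p s)))" for s
      define Fx where "Fx s = H (ph s, qh s) - H (ph t0, qh t0) - Mx s" for s
      have tab: "s \<in> {a<..<b}" if "t0 \<le> s" "s \<le> t" for s
      proof -
        have "s \<in> I" using that tI by (auto simp: I_def)
        then show ?thesis using IS by blast
      qed
      have pd0: "(p has_vector_derivative vderiv_n 1 p s) (at s)" if "s \<in> {a<..<b}" for s
        using p_ode[OF that] p1[OF that] by simp
      have qd0: "(q has_vector_derivative vderiv_n 1 q s) (at s)" if "s \<in> {a<..<b}" for s
        using q_ode[OF that] q1[OF that] by simp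
      have php_d: "(ph has_vector_derivative php s) (at s)" if "s \<in> {a<..<b}" for s
      proof -
        have "((\<lambda>s. p s + (\<Sum>j\<in>J. h ^ j *\<^sub>R ep j s)) has_vector_derivative (vderiv_n 1 p s + (\<Sum>j\<in>J. h ^ j *\<^sub>R (A s *v ep j s + B s *v eq j s - cp j *\<^sub>R vderiv_n (j + 1) p s)))) (at s)"
          unfolding A_def B_def
          by (intro has_vector_derivative_add has_vector_derivative_sum pd0 that
              bounded_linear.has_vector_derivative[OF bounded_linear_scaleR_right] epd)
        then show ?thesis unfolding ph_def dp_def php_def .
      qed
      have qhp_d: "(qh has_vector_derivative qhp s) (at s)" if "s \<in> {a<..<b}" for s
      proof -
        have "((\<lambda>s. q s + (\<Sum>j\<in>J. h ^ j *\<^sub>R eq j s)) has_vector_derivative (vderiv_n 1 q s + (\<Sum>j\<in>J. h ^ j *\<^sub>R (C s *v ep j s + D s *v eq j s - cq j *\<^sub>R vderiv_n (j + 1) q s)))) (at s)"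
          unfolding C_def D_def
          by (intro has_vector_derivative_add has_vector_derivative_sum qd0 that
              bounded_linear.has_vector_derivative[OF bounded_linear_scaleR_right] eqd)
        then show ?thesis unfolding qh_def dq_def qhp_def .
      qed
      have H_d: "((\<lambda>s. H (ph s, qh s)) has_real_derivative lin1 H (ph s, qh s) (php s, qhp s)) (at s)"
        if "s \<in> {a<..<b}" for s
        using curve_chain[OF has_vector_derivative_Pair[OF php_d[OF that] qhp_d[OF that]] Hd] by simp
      have kge: "1 \<le> k" if "k \<in> KK" for k using that r_even unfolding KK_def by auto
      have cf: "continuous_on {t0..t} (\<lambda>u. vderiv_n (k+1) p u \<bullet> vderiv_n (k+1) q u)" for k
        by (intro continuous_at_imp_continuous_on ballI continuous_intros pv_c qv_c tab) auto
      have int_d: "((\<lambda>s. integral {t0..s} (\<lambda>u. vderiv_n (k+1) p u \<bullet> vderiv_n (k+1) q u)) has_real_derivative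
          (vderiv_n (k+1) p s \<bullet> vderiv_n (k+1) q s)) (at s)" if "t0 < s" "s < t" for k s
      proof -
        have "((\<lambda>s. integral {t0..s} (\<lambda>u. vderiv_n (k+1) p u \<bullet> vderiv_n (k+1) q u)) has_real_derivative
          (vderiv_n (k+1) p s \<bullet> vderiv_n (k+1) q s)) (at s within {t0..t})"
          by (rule integral_has_real_derivative[OF cf]) (use that in auto)
        then have "((\<lambda>s. integral {t0..s} (\<lambda>u. vderiv_n (k+1) p u \<bullet> vderiv_n (k+1) q u)) has_real_derivative
          (vderiv_n (k+1) p s \<bullet> vderiv_n (k+1) q s)) (at s within {t0<..<t})"
          by (rule DERIV_subset) auto
        then show ?thesis using at_within_open[of s "{t0<..<t}"] that by simp
      qed
      have Mx_d: "(Mx has_real_derivative Mxd s) (at s)" if "t0 < s" "s < t" for s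
      proof -
        have s: "s \<in> {a<..<b}" using that by (intro tab) auto
        define D1 where "D1 k = h ^ (2*k) * (cq (2*k) * (vderiv_n 1 p s \<bullet> vderiv_n (2*k+1) q s + (-1) ^ (k+1) * (vderiv_n (k+1) p s \<bullet> vderiv_n (k+1) q s))
             - cp (2*k) * (vderiv_n 1 q s \<bullet> vderiv_n (2*k+1) p s + (-1) ^ (k+1) * (vderiv_n (k+1) q s \<bullet> vderiv_n (k+1) p s)))" for k
        define D2 where "D2 k = h ^ (2*k) * (-1) ^ (k+2) * (cq (2*k) - cp (2*k)) * (vderiv_n (k+1) p s \<bullet> vderiv_n (k+1) q s)" for k
        have d1: "((\<lambda>s. h ^ (2*k) *
               (cq (2*k) * (\<Sum>l=1..k. (-1) ^ (l+1) *
                    (vderiv_n l p s \<bullet> vderiv_n (2*k+1-l) q s - vderiv_n l p t0 \<bullet> vderiv_n (2*k+1-l) q t0))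
              - cp (2*k) * (\<Sum>l=1..k. (-1) ^ (l+1) *
                    (vderiv_n l q s \<bullet> vderiv_n (2*k+1-l) p s - vderiv_n l q t0 \<bullet> vderiv_n (2*k+1-l) p t0)))) has_real_derivative D1 k) (at s)"
          if "k \<in> KK" for k
          unfolding D1_def
          by (intro DERIV_cmult DERIV_diff term_deriv[where a="\<lambda>n. vderiv_n n p" and b="\<lambda>n. vderiv_n n q"]
              term_deriv[where a="\<lambda>n. vderiv_n n q" and b="\<lambda>n. vderiv_n n p"] pvd qvd s kge that)
        have d2: "((\<lambda>s. h ^ (2*k) * (-1) ^ (k+2) * (cq (2*k) - cp (2*k)) *
                  integral {t0..s} (\<lambda>s. vderiv_n (k+1) p s \<bullet> vderiv_n (k+1) q s)) has_real_derivative D2 k) (at s)" for k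
          unfolding D2_def by (intro DERIV_cmult int_d that)
        have "(Mx has_real_derivative (\<Sum>k\<in>KK. D1 k) + (\<Sum>k\<in>KK. D2 k)) (at s)"
          unfolding Mx_def by (intro DERIV_add DERIV_sum d1 d2)
        moreover have "(\<Sum>k\<in>KK. D1 k) + (\<Sum>k\<in>KK. D2 k) = Mxd s"
          unfolding Mxd_def sum.distrib[symmetric]
        proof (intro sum.cong refl)
          fix k
          have "vderiv_n (k+1) q s \<bullet> vderiv_n (k+1) p s = vderiv_n (k+1) p s \<bullet> vderiv_n (k+1) q s" by (rule inner_commute)
          then show "D1 k + D2 k = h ^ (2*k) * (cq (2*k) * (vderiv_n 1 p s \<bullet> vderiv_n (2*k+1) q s)
              - cp (2*k) * (vderiv_n 1 q s \<bullet> vderiv_n (2*k+1) p s))"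
            unfolding D1_def D2_def by (simp add: algebra_simps power_add)
        qed
        ultimately show ?thesis by simp
      qed
      have php_eq: "php s = (- grad_q H (p s, q s)) + Ln s - Wp s" if "s \<in> {a<..<b}" for s
      proof -
        have "(\<Sum>j\<in>J. h ^ j *\<^sub>R (A s *v ep j s + B s *v eq j s - cp j *\<^sub>R vderiv_n (j + 1) p s)) = A s *v dp s + B s *v dq s - Wp s"
          unfolding dp_def dq_def Wp_def mv_sum
          by (simp add: scaleR_right_diff_distrib scaleR_add_right sum.distrib sum_subtractf)
        then show ?thesis unfolding php_def Ln_def using p1[OF that] by simp
      qed
      have qhp_eq: "qhp s = grad_p H (p s, q s) + Lp s - Wq s" if "s \<in> {a<..<b}" for s
      proof -
        have "(\<Sum>j\<in>J. h ^ j *\<^sub>R (C s *v ep j s + D s *v eq j s - cq j *\<^sub>R vderiv_n (j + 1) q s)) = C s *v dp s + D s *v dq s - Wq s"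
          unfolding dp_def dq_def Wq_def mv_sum
          by (simp add: scaleR_right_diff_distrib scaleR_add_right sum.distrib sum_subtractf)
        then show ?thesis unfolding qhp_def Lp_def using q1[OF that] by simp
      qed
      have main_eq: "lin1 H (ph s, qh s) (php s, qhp s) = Mxd s + E s" if "s \<in> {a<..<b}" for s
      proof -
        have e1: "lin1 H (ph s, qh s) (php s, qhp s) = grad_p H (ph s, qh s) \<bullet> php s - (- grad_q H (ph s, qh s)) \<bullet> qhp s"
          by (simp add: lin1_grad)
        have e2: "grad_p H (ph s, qh s) = grad_p H (p s, q s) + Lp s + RP s" by (simp add: RP_def)
        have e3: "- grad_q H (ph s, qh s) = (- grad_q H (p s, q s)) + Ln s + RN s" by (simp add: RN_def)
        have "lin1 H (ph s, qh s) (php s, qhp s) = (grad_p H (p s, q s) + Lp s + RP s) \<bullet> ((- grad_q H (p s, q s)) + Ln s - Wp s)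
            - ((- grad_q H (p s, q s)) + Ln s + RN s) \<bullet> (grad_p H (p s, q s) + Lp s - Wq s)"
          unfolding e1 by (simp only: e2 e3 php_eq[OF that] qhp_eq[OF that])
        also have "\<dots> = - (grad_p H (p s, q s) \<bullet> Wp s) + (- grad_q H (p s, q s)) \<bullet> Wq s - Lp s \<bullet> Wp s + Ln s \<bullet> Wq s
            + RP s \<bullet> ((- grad_q H (p s, q s)) + Ln s - Wp s) - RN s \<bullet> (grad_p H (p s, q s) + Lp s - Wq s)"
          by (rule alg_id)
        also have "- (grad_p H (p s, q s) \<bullet> Wp s) + (- grad_q H (p s, q s)) \<bullet> Wq s = Mxd s"
        proof -
          have "- (grad_p H (p s, q s) \<bullet> Wp s) + (- grad_q H (p s, q s)) \<bullet> Wq s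
              = - (vderiv_n 1 q s \<bullet> Wp s) + vderiv_n 1 p s \<bullet> Wq s"
            using p1[OF that] q1[OF that] by simp
          also have "\<dots> = (\<Sum>j\<in>J. vderiv_n 1 p s \<bullet> (h ^ j *\<^sub>R (cq j *\<^sub>R vderiv_n (j + 1) q s)))
              - (\<Sum>j\<in>J. vderiv_n 1 q s \<bullet> (h ^ j *\<^sub>R (cp j *\<^sub>R vderiv_n (j + 1) p s)))"
            unfolding Wp_def Wq_def inner_sum_right by simp
          also have "\<dots> = (\<Sum>j\<in>J. h ^ j * (cq j * (vderiv_n 1 p s \<bullet> vderiv_n (j + 1) q s) - cp j * (vderiv_n 1 q s \<bullet> vderiv_n (j + 1) p s)))"
            unfolding sum_subtractf[symmetric] by (intro sum.cong refl) (simp add: algebra_simps)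
          also have "\<dots> = Mxd s"
            unfolding J_def Mxd_def KK_def
            by (rule even_reindex[OF r_even]) (simp add: cp_odd cq_odd)
          finally show ?thesis .
        qed
        finally show ?thesis unfolding E_def php_eq[OF that, symmetric] qhp_eq[OF that, symmetric] by simp
      qed
      have Fx_d: "(Fx has_real_derivative E s) (at s)" if "t0 < s" "s < t" for s
      proof -
        have sab: "s \<in> {a<..<b}" using that by (intro tab) auto
        have "(Fx has_real_derivative lin1 H (ph s, qh s) (php s, qhp s) - 0 - Mxd s) (at s)"
          unfolding Fx_def by (intro DERIV_diff H_d sab DERIV_const Mx_d that)
        then show ?thesis using main_eq[OF sab] by simp
      qed
      have hr: "0 \<le> h ^ r" "h ^ r \<le> 1" using h by (auto simp: power_le_one)
      have Jr: "\<And>j. j \<in> J \<Longrightarrow> r \<le> j" by (simp add: J_def)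
      have Ebound: "\<bar>E s\<bar> \<le> h ^ (2*r) * Gs s" if sI: "s \<in> I" for s
      proof -
        have sab: "s \<in> {a<..<b}" using sI IS by blast
        have ndp: "norm (dp s) \<le> h ^ r * \<epsilon>p s" unfolding dp_def \<epsilon>p_def by (rule sum_pow_bound[OF h Jr])
        have ndq: "norm (dq s) \<le> h ^ r * \<epsilon>q s" unfolding dq_def \<epsilon>q_def by (rule sum_pow_bound[OF h Jr])
        have nWp: "norm (Wp s) \<le> h ^ r * \<omega>p s" unfolding Wp_def \<omega>p_def by (rule sum_pow_bound[OF h Jr])
        have nWq: "norm (Wq s) \<le> h ^ r * \<omega>q s" unfolding Wq_def \<omega>q_def by (rule sum_pow_bound[OF h Jr])
        have \<epsilon>p0: "0 \<le> \<epsilon>p s" unfolding \<epsilon>p_def by (intro sum_nonneg) auto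
        have \<epsilon>q0: "0 \<le> \<epsilon>q s" unfolding \<epsilon>q_def by (intro sum_nonneg) auto
        have \<omega>p0: "0 \<le> \<omega>p s" unfolding \<omega>p_def by (intro sum_nonneg) auto
        have \<omega>q0: "0 \<le> \<omega>q s" unfolding \<omega>q_def by (intro sum_nonneg) auto
        have mA0: "0 \<le> mA s" and mB0: "0 \<le> mB s" and mC0: "0 \<le> mC s" and mD0: "0 \<le> mD s"
          by (simp_all add: mA_def mB_def mC_def mD_def mn0)
        have a10: "0 \<le> a1 s" unfolding a1_def using mC0 mD0 \<epsilon>p0 \<epsilon>q0 by simp
        have a30: "0 \<le> a3 s" unfolding a3_def using mA0 mB0 \<epsilon>p0 \<epsilon>q0 by simp
        have nLp: "norm (Lp s) \<le> h ^ r * a1 s"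
        proof -
          have "norm (Lp s) \<le> norm (C s *v dp s) + norm (D s *v dq s)" unfolding Lp_def by (rule norm_triangle_ineq)
          also have "\<dots> \<le> mC s * norm (dp s) + mD s * norm (dq s)"
            using mat_bound[of "C s" "dp s"] mat_bound[of "D s" "dq s"]
            unfolding mC_def mD_def mn_def C_def D_def y_def by (intro add_mono) auto
          also have "\<dots> \<le> mC s * (h ^ r * \<epsilon>p s) + mD s * (h ^ r * \<epsilon>q s)"
            using mC0 mD0 ndp ndq by (intro add_mono mult_left_mono) auto
          also have "\<dots> = h ^ r * a1 s" by (simp add: a1_def algebra_simps)
          finally show ?thesis .
        qed
        have nLn: "norm (Ln s) \<le> h ^ r * a3 s"
        proof -
          have "norm (Ln s) \<le> norm (A s *v dp s) + norm (B s *v dq s)" unfolding Ln_def by (rule norm_triangle_ineq)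
          also have "\<dots> \<le> mA s * norm (dp s) + mB s * norm (dq s)"
            using mat_bound[of "A s" "dp s"] mat_bound[of "B s" "dq s"]
            unfolding mA_def mB_def mn_def A_def B_def y_def by (intro add_mono) auto
          also have "\<dots> \<le> mA s * (h ^ r * \<epsilon>p s) + mB s * (h ^ r * \<epsilon>q s)"
            using mA0 mB0 ndp ndq by (intro add_mono mult_left_mono) auto
          also have "\<dots> = h ^ r * a3 s" by (simp add: a3_def algebra_simps)
          finally show ?thesis .
        qed
        have n\<delta>: "norm (dp s, dq s) \<le> h ^ r * \<epsilon> s"
          using norm_Pair_le[of "dp s" "dq s"] ndp ndq by (simp add: \<epsilon>_def distrib_left)
        have \<epsilon>0: "0 \<le> \<epsilon> s" using \<epsilon>p0 \<epsilon>q0 by (simp add: \<epsilon>_def)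
        have n\<delta>1: "norm (dp s, dq s) \<le> 1"
        proof (cases "r = 0")
          case True
          then have "J = {}" by (simp add: J_def)
          then show ?thesis by (simp add: dp_def dq_def)
        next
          case False
          have "h ^ r \<le> h ^ 1" using h False by (intro power_decreasing) auto
          then have hr1: "h ^ r \<le> h0" using hh0 by simp
          have "\<epsilon> s \<le> \<bar>Emax\<bar>" using Emax[OF sI] by linarith
          then have "h ^ r * \<epsilon> s \<le> h0 * \<bar>Emax\<bar>" using hr1 \<epsilon>0 hr(1) by (intro mult_mono) auto
          also have "\<dots> \<le> 1" unfolding h0_def by (simp add: field_simps)
          finally show ?thesis using n\<delta> by linarith
        qed
        have ysK: "(p s, q s) \<in> K" using sI by (auto simp: K_def y_def)
        have sq: "real CARD('d) * M * (norm (dp s, dq s))^2 \<le> h ^ r * h ^ r * a5 s"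
        proof -
          have "real CARD('d) * M * (norm (dp s, dq s))^2 \<le> real CARD('d) * M * (h ^ r * \<epsilon> s)^2"
            using n\<delta> M0 by (intro mult_left_mono power_mono) auto
          also have "\<dots> = h ^ r * h ^ r * a5 s" by (simp add: a5_def power2_eq_square algebra_simps)
          finally show ?thesis .
        qed
        have nRP: "norm (RP s) \<le> h ^ r * h ^ r * a5 s"
        proof -
          have comp: "\<bar>RP s $ i\<bar> \<le> M * (norm (dp s, dq s))^2" for i
          proof -
            have "RP s $ i = grad_p H ((p s, q s) + (dp s, dq s)) $ i - grad_p H (p s, q s) $ i
                - lin1 (\<lambda>x. grad_p H x $ i) (p s, q s) (dp s, dq s)"
              unfolding RP_def Lp_def C_def D_def lin1_jac ph_def qh_def by simp
            then have "\<bar>RP s $ i\<bar> \<le> MP i * (norm (dp s, dq s))^2" using MP[OF ysK n\<delta>1] by simp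
            also have "\<dots> \<le> M * (norm (dp s, dq s))^2" using MPM by (intro mult_right_mono) auto
            finally show ?thesis .
          qed
          have "norm (RP s) \<le> (\<Sum>i\<in>UNIV. \<bar>RP s $ i\<bar>)" by (rule norm_le_l1_cart)
          also have "\<dots> \<le> (\<Sum>i\<in>(UNIV::'d set). M * (norm (dp s, dq s))^2)" by (rule sum_mono) (rule comp)
          also have "\<dots> = real CARD('d) * M * (norm (dp s, dq s))^2" by simp
          finally show ?thesis using sq by linarith
        qed
        have nRN: "norm (RN s) \<le> h ^ r * h ^ r * a5 s"
        proof -
          have comp: "\<bar>RN s $ i\<bar> \<le> M * (norm (dp s, dq s))^2" for i
          proof -
            have "RN s $ i = (- grad_q H ((p s, q s) + (dp s, dq s))) $ i - (- grad_q H (p s, q s)) $ i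
                - lin1 (\<lambda>x. (- grad_q H x) $ i) (p s, q s) (dp s, dq s)"
              unfolding RN_def Ln_def A_def B_def lin1_jac ph_def qh_def by simp
            then have "\<bar>RN s $ i\<bar> \<le> MN i * (norm (dp s, dq s))^2" using MN[OF ysK n\<delta>1] by simp
            also have "\<dots> \<le> M * (norm (dp s, dq s))^2" using MNM by (intro mult_right_mono) auto
            finally show ?thesis .
          qed
          have "norm (RN s) \<le> (\<Sum>i\<in>UNIV. \<bar>RN s $ i\<bar>)" by (rule norm_le_l1_cart)
          also have "\<dots> \<le> (\<Sum>i\<in>(UNIV::'d set). M * (norm (dp s, dq s))^2)" by (rule sum_mono) (rule comp)
          also have "\<dots> = real CARD('d) * M * (norm (dp s, dq s))^2" by simp
          finally show ?thesis using sq by linarith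
        qed
        have nphp: "norm (php s) \<le> a6 s"
        proof -
          have "norm (php s) \<le> norm (- grad_q H (p s, q s)) + norm (Ln s) + norm (Wp s)"
            unfolding php_eq[OF sab] by (meson norm_triangle_ineq norm_triangle_ineq4 add_mono order_trans order_refl)
          also have "norm (- grad_q H (p s, q s)) = norm (vderiv_n 1 p s)" using p1[OF sab] by simp
          also have "norm (Ln s) \<le> a3 s" using nLn hr a30 by (meson mult_left_le_one_le order_trans)
          also have "norm (Wp s) \<le> \<omega>p s" using nWp hr \<omega>p0 by (meson mult_left_le_one_le order_trans)
          finally show ?thesis by (simp add: a6_def)
        qed
        have nqhp: "norm (qhp s) \<le> a7 s"
        proof -
          have "norm (qhp s) \<le> norm (grad_p H (p s, q s)) + norm (Lp s) + norm (Wq s)"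
            unfolding qhp_eq[OF sab] by (meson norm_triangle_ineq norm_triangle_ineq4 add_mono order_trans order_refl)
          also have "norm (grad_p H (p s, q s)) = norm (vderiv_n 1 q s)" using q1[OF sab] by simp
          also have "norm (Lp s) \<le> a1 s" using nLp hr a10 by (meson mult_left_le_one_le order_trans)
          also have "norm (Wq s) \<le> \<omega>q s" using nWq hr \<omega>q0 by (meson mult_left_le_one_le order_trans)
          finally show ?thesis by (simp add: a7_def)
        qed
        have "\<bar>E s\<bar> \<le> h ^ r * h ^ r * (a1 s * \<omega>p s + a3 s * \<omega>q s + a5 s * a6 s + a5 s * a7 s)"
          unfolding E_def by (rule err_bound[OF nLp nWp nLn nWq nRP nRN nphp nqhp hr(1)])
        moreover have "h ^ r * h ^ r = h ^ (2*r)" by (simp add: power_add[symmetric] mult_2)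
        ultimately show ?thesis by (simp add: Gs_def)
      qed
      have pvc_on: "continuous_on {t0..t} (vderiv_n n p)" for n
        by (intro continuous_at_imp_continuous_on ballI pv_c tab) auto
      have qvc_on: "continuous_on {t0..t} (vderiv_n n q)" for n
        by (intro continuous_at_imp_continuous_on ballI qv_c tab) auto
      have intc: "continuous_on {t0..t} (\<lambda>s. integral {t0..s} (\<lambda>u. vderiv_n (k+1) p u \<bullet> vderiv_n (k+1) q u))" for k
        by (rule indefinite_integral_continuous_1[OF integrable_continuous_real[OF cf]])
      have Fx_c: "continuous_on {t0..t} Fx"
      proof -
        have c1: "continuous_on {t0..t} (\<lambda>s. H (ph s, qh s))"
          by (intro continuous_at_imp_continuous_on ballI DERIV_isCont[OF H_d] tab) auto
        have c2: "continuous_on {t0..t} Mx"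
          unfolding Mx_def by (intro continuous_intros pvc_on qvc_on intc)
        show ?thesis unfolding Fx_def by (intro continuous_intros c1 c2)
      qed
      have F0: "Fx t0 = 0" by (simp add: Fx_def Mx_def)
      have Fbound: "\<bar>Fx t\<bar> \<le> Gmax * (t - t0) * h ^ (2*r)"
      proof (cases "t = t0")
        case True then show ?thesis using F0 by simp
      next
        case False
        then have tt: "t0 < t" using htt by simp
        have dif: "Fx differentiable (at x)" if "t0 < x" "x < t" for x
          by (rule differentiableI[OF has_field_derivative_imp_has_derivative[OF Fx_d[OF that]]])
        obtain l z where z: "t0 < z" "z < t" "DERIV Fx z :> l" "Fx t - Fx t0 = (t - t0) * l"
          using MVT[OF tt Fx_c dif] by blast
        have lz: "l = E z" using DERIV_unique[OF z(3) Fx_d[OF z(1,2)]] .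
        have zI: "z \<in> I" using z tI by (auto simp: I_def)
        have "\<bar>Fx t\<bar> = (t - t0) * \<bar>E z\<bar>" using z(4) F0 lz tt by (simp add: abs_mult)
        also have "\<dots> \<le> (t - t0) * (h ^ (2*r) * Gs z)" using Ebound[OF zI] tt by (intro mult_left_mono) auto
        also have "\<dots> \<le> (t - t0) * (h ^ (2*r) * Gmax)" using Gmax[OF zI] tt h by (intro mult_left_mono) auto
        finally show ?thesis by (simp add: algebra_simps)
      qed
      then show "(let ph = (\<lambda>s. p s + (\<Sum>j\<in>{r..<2*r}. h ^ j *\<^sub>R ep j s));
          qh = (\<lambda>s. q s + (\<Sum>j\<in>{r..<2*r}. h ^ j *\<^sub>R eq j s))
      in \<bar>(H (ph t, qh t) - H (ph t0, qh t0))
          - ((\<Sum>k\<in>{r div 2..<r}. h ^ (2*k) *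
               (cq (2*k) * (\<Sum>l=1..k. (-1) ^ (l+1) *
                    (vderiv_n l p t \<bullet> vderiv_n (2*k+1-l) q t - vderiv_n l p t0 \<bullet> vderiv_n (2*k+1-l) q t0))
              - cp (2*k) * (\<Sum>l=1..k. (-1) ^ (l+1) *
                    (vderiv_n l q t \<bullet> vderiv_n (2*k+1-l) p t - vderiv_n l q t0 \<bullet> vderiv_n (2*k+1-l) p t0))))
             + (\<Sum>k\<in>{r div 2..<r}. h ^ (2*k) * (-1) ^ (k+2) * (cq (2*k) - cp (2*k)) *
                  integral {t0..t} (\<lambda>s. vderiv_n (k+1) p s \<bullet> vderiv_n (k+1) q s)))\<bar>
         \<le> Gmax * (t - t0) * h ^ (2*r))"
        unfolding Let_def Fx_def Mx_def ph_def qh_def dp_def dq_def J_def KK_def .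

    qed
  qed
qed

end
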